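(* Let $H$ be a hexagonal system and $D\subseteq E(H)$. Then $D$ is an elementary edge cut of $H$ if and only if the edge set $D^{*}$ forms a cycle of the dual graph $H^{*}$ and all end-vertices of edges of $D$ that lie inside this cycle (equivalently, all those that lie outside it) have the same color.
   Context: A hexagonal system (HS) is a finite 2-connected plane graph in which every interior face is a regular hexagon of the hexagonal lattice. Its vertices are properly colored black and white (adjacent vertices get different colors). The dual graph $H^{*}$ has one vertex for each hexagon of $H$ (placed at its center) and one vertex in the exterior face; for each edge $e$ of $H$ there is an edge $e^{*}$ of $H^{*}$ crossing $e$ and joining the vertices of the two faces (hexagons or the exterior face) containing $e$. For $E_0\subseteq E(H)$, $E_0^{*}=\{e^{*}:e\in E_0\}$. For a partition $\{V_1,V_2\}$ of $V(H)$, the set $D$ of edges with one end in $V_1$ and the other in $V_2$ is an edge cut; $D$ is an elementary edge cut (e-cut) if $H-D$ has exactly two components and every edge of $D$ joins a black vertex of one of these components (the black bank) to a white vertex of the other (the white bank). *)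

theory Defs
  imports Main
begin

text \<open>
  Hexagons (cells) of the hexagonal lattice are indexed by the points
  of the triangular lattice, \<open>int \<times> int\<close> (cell (a,b) is centred at a + b\<cdot>e^(i\<pi>/3)).
  Vertices of the hexagonal lattice are the triangles of the triangular lattice:
  (a,b,False) is the "up" triangle {(a,b),(a+1,b),(a,b+1)} and (a,b,True) the
  "down" triangle {(a+1,b),(a,b+1),(a+1,b+1)}; a vertex lies on the boundary of
  exactly the three hexagons of its triangle.  Up triangles are black, down ones white
  (this is a proper 2-colouring of the hexagonal lattice).
  Two vertices are adjacent iff their triangles share two cells; the common two cells
  are the two hexagons on either side of the edge, so the dual edge e* joins them.
\<close>

type_synonym cell = "int \<times> int"
type_synonym vert = "int \<times> int \<times> bool"

definition tri :: "vert \<Rightarrow> cell set" where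
  "tri v = (case v of (a, b, False) \<Rightarrow> {(a, b), (a + 1, b), (a, b + 1)}
                    | (a, b, True) \<Rightarrow> {(a + 1, b), (a, b + 1), (a + 1, b + 1)})"

definition black :: "vert \<Rightarrow> bool" where
  "black v = (\<not> snd (snd v))"

definition lat_adj :: "vert \<Rightarrow> vert \<Rightarrow> bool" where
  "lat_adj u v \<longleftrightarrow> card (tri u \<inter> tri v) = 2"

definition cell_adj :: "cell \<Rightarrow> cell \<Rightarrow> bool" where
  "cell_adj c d \<longleftrightarrow> (fst d - fst c, snd d - snd c) \<in>
      {(1, 0), (-1, 0), (0, 1), (0, -1), (1, -1), (-1, 1)}"

definition hs_verts :: "cell set \<Rightarrow> vert set" where
  "hs_verts S = {v. tri v \<inter> S \<noteq> {}}"

definition hs_edges :: "cell set \<Rightarrow> vert set set" where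
  "hs_edges S = {{u, v} | u v. lat_adj u v \<and> tri u \<inter> tri v \<inter> S \<noteq> {}}"

definition edgerel :: "'a set set \<Rightarrow> ('a \<times> 'a) set" where
  "edgerel E = {(x, y). {x, y} \<in> E}"

definition connected_graph :: "'a set \<Rightarrow> 'a set set \<Rightarrow> bool" where
  "connected_graph V E \<longleftrightarrow> (\<forall>u\<in>V. \<forall>w\<in>V. (u, w) \<in> (edgerel E)\<^sup>*)"

definition two_connected :: "'a set \<Rightarrow> 'a set set \<Rightarrow> bool" where
  "two_connected V E \<longleftrightarrow> finite V \<and> card V \<ge> 3 \<and> connected_graph V E \<and>
     (\<forall>x\<in>V. connected_graph (V - {x}) {e \<in> E. x \<notin> e})"

definition components :: "'a set \<Rightarrow> 'a set set \<Rightarrow> 'a set set" where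
  "components V E = (\<lambda>v. {w \<in> V. (v, w) \<in> (edgerel E)\<^sup>*}) ` V"

text \<open>
  Hexagonal system with hexagon set S: the graph spanned by S is 2-connected and every
  interior face is a hexagon of S, i.e. the hexagons not in S form a connected set
  (no holes; a cell not in S that is enclosed would be an interior face that is either
  not a hexagon or a hexagon that is not one of the hexagons of the system).
\<close>
definition hexagonal_system :: "cell set \<Rightarrow> bool" where
  "hexagonal_system S \<longleftrightarrow> finite S \<and> two_connected (hs_verts S) (hs_edges S) \<and>
     (\<forall>c d. c \<notin> S \<longrightarrow> d \<notin> S \<longrightarrow>
        (c, d) \<in> {(x, y). cell_adj x y \<and> x \<notin> S \<and> y \<notin> S}\<^sup>*)"

definition e_cut :: "cell set \<Rightarrow> vert set set \<Rightarrow> bool" where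
  "e_cut S D \<longleftrightarrow> D \<subseteq> hs_edges S \<and>
     (\<exists>V1 V2. V1 \<union> V2 = hs_verts S \<and> V1 \<inter> V2 = {} \<and> V1 \<noteq> {} \<and> V2 \<noteq> {} \<and>
        D = {e \<in> hs_edges S. e \<inter> V1 \<noteq> {} \<and> e \<inter> V2 \<noteq> {}}) \<and>
     (\<exists>B W. B \<noteq> W \<and> components (hs_verts S) (hs_edges S - D) = {B, W} \<and>
        (\<forall>e\<in>D. \<exists>b w. e = {b, w} \<and> b \<in> B \<and> w \<in> W \<and> black b \<and> \<not> black w))"

text \<open>
  Dual graph H*: vertices are \<open>Some c\<close> for hexagons c \<in> S and \<open>None\<close> for the
  exterior face.
  H* may have parallel edges, so dual edges are identified with the primal edges.
\<close>
definition dual_cells :: "vert set \<Rightarrow> cell set" where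
  "dual_cells e = \<Inter> (tri ` e)"

definition dual_ends :: "cell set \<Rightarrow> vert set \<Rightarrow> cell option set" where
  "dual_ends S e = (\<lambda>c. if c \<in> S then Some c else None) ` dual_cells e"

definition dual_cycle :: "cell set \<Rightarrow> vert set set \<Rightarrow> bool" where
  "dual_cycle S D \<longleftrightarrow> D \<noteq> {} \<and>
     (\<forall>x. card {e \<in> D. x \<in> dual_ends S e} \<in> {0, 2}) \<and>
     (\<forall>e1\<in>D. \<forall>e2\<in>D. (e1, e2) \<in>
        {(e, f). e \<in> D \<and> f \<in> D \<and> dual_ends S e \<inter> dual_ends S f \<noteq> {}}\<^sup>*)"

text \<open>
  Sides of the closed curve D*: a vertex assignment \<open>side\<close> (True = inside, False =
  outside) such that an edge of H crosses the curve (i.e. changes side) exactly when it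
  belongs to D (the curve D* meets H only in the crossings of e* with e, e \<in> D).
\<close>
definition side_function :: "cell set \<Rightarrow> vert set set \<Rightarrow> (vert \<Rightarrow> bool) \<Rightarrow> bool" where
  "side_function S D side \<longleftrightarrow>
     (\<forall>e\<in>hs_edges S. e \<in> D \<longleftrightarrow> (\<exists>u v. e = {u, v} \<and> side u \<noteq> side v))"

end

theory Submission
  imports Defs
begin

definition dE :: "int \<Rightarrow> int \<Rightarrow> vert set" where "dE b j = {(j,b,False),(j,b,True)}"
definition vE :: "int \<Rightarrow> int \<Rightarrow> vert set" where "vE b j = {(j-1,b,True),(j,b,False)}"
definition hE :: "int \<Rightarrow> int \<Rightarrow> vert set" where "hE b j = {(j,b,False),(j,b-1,True)}"

definition LE :: "vert set set" where
  "LE = {dE b j | b j. True} \<union> {vE b j | b j. True} \<union> {hE b j | b j. True}"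

lemma dE_LE: "dE b j \<in> LE" unfolding LE_def by blast
lemma vE_LE: "vE b j \<in> LE" unfolding LE_def by blast
lemma hE_LE: "hE b j \<in> LE" unfolding LE_def by blast

lemma dc_dE: "dual_cells (dE b j) = {(j+1,b),(j,b+1)}"
  by (auto simp: dual_cells_def dE_def tri_def)
lemma dc_vE: "dual_cells (vE b j) = {(j,b),(j,b+1)}"
  by (auto simp: dual_cells_def vE_def tri_def)
lemma dc_hE: "dual_cells (hE b j) = {(j,b),(j+1,b)}"
  by (auto simp: dual_cells_def hE_def tri_def)

lemma nbrT_LE:
  assumes "(a',b') = (a,b) \<or> (a',b') = (a+1,b) \<or> (a',b') = (a,b+1)"
  shows "{(a,b,True),(a',b',False)} \<in> LE"
proof -
  have "{(a,b,True),(a',b',False)} = dE b a \<or> {(a,b,True),(a',b',False)} = vE b (a+1)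
     \<or> {(a,b,True),(a',b',False)} = hE (b+1) a"
    using assms by (auto simp: dE_def vE_def hE_def)
  then show ?thesis using dE_LE vE_LE hE_LE by metis
qed

lemma tri_same_False:
  assumes "x \<in> tri (a,b,False)" "y \<in> tri (a,b,False)" "x \<in> tri (a',b',False)" "y \<in> tri (a',b',False)" "x \<noteq> y"
  shows "a = a' \<and> b = b'"
  using assms unfolding tri_def apply simp apply (elim disjE) by simp_all

lemma tri_same_True:
  assumes "x \<in> tri (a,b,True)" "y \<in> tri (a,b,True)" "x \<in> tri (a',b',True)" "y \<in> tri (a',b',True)" "x \<noteq> y"
  shows "a = a' \<and> b = b'"
  using assms unfolding tri_def apply simp apply (elim disjE) by simp_all

lemma card_tri: "card (tri v) = 3"
  by (cases v) (auto simp: tri_def split: bool.split)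

lemma tri_TF:
  assumes "x \<in> tri (a,b,True)" "y \<in> tri (a,b,True)" "x \<in> tri (a',b',False)" "y \<in> tri (a',b',False)" "x \<noteq> y"
  shows "(a',b') = (a,b) \<or> (a',b') = (a+1,b) \<or> (a',b') = (a,b+1)"
  using assms unfolding tri_def apply simp apply (elim disjE) by simp_all

lemma lat_adj_imp_LE:
  assumes "lat_adj u v" shows "{u,v} \<in> LE"
proof -
  obtain x y where xy: "tri u \<inter> tri v = {x,y}" "x \<noteq> y"
    using assms unfolding lat_adj_def by (auto simp: card_2_iff)
  obtain a b s where u: "u = (a,b,s)" by (cases u) auto
  obtain a' b' t where v: "v = (a',b',t)" by (cases v) auto
  have xu: "x \<in> tri u" "x \<in> tri v" "y \<in> tri u" "y \<in> tri v" using xy by auto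
  have nuv: "u \<noteq> v"
  proof
    assume "u = v" then have "tri u = {x,y}" using xy by simp
    then have "card (tri u) = 2" using xy(2) by simp
    then show False using card_tri by simp
  qed
  show ?thesis
  proof (cases s; cases t)
    assume "s" "t"
    then show ?thesis using tri_same_True[of x a b y a' b'] xu xy(2) nuv u v by auto
  next
    assume "\<not>s" "\<not>t"
    then show ?thesis using tri_same_False[of x a b y a' b'] xu xy(2) nuv u v by auto
  next
    assume "s" "\<not>t"
    then show ?thesis using tri_TF[of x a b y a' b'] xu xy(2) u v nbrT_LE by auto
  next
    assume "\<not>s" "t"
    then show ?thesis using tri_TF[of x a' b' y a b] xu xy(2) u v nbrT_LE[of a b a' b']
      by (auto simp: insert_commute)
  qed
qed

lemma card_two: "x \<noteq> y \<Longrightarrow> A = {x,y} \<Longrightarrow> card A = 2" by simp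

lemma LE_imp_lat_adj:
  assumes "{u,v} \<in> LE" shows "lat_adj u v"
proof -
  have "\<exists>x y. tri u \<inter> tri v = {x,y} \<and> x \<noteq> y"
  proof -
    have "dual_cells {u,v} = tri u \<inter> tri v" by (simp add: dual_cells_def)
    moreover have "\<exists>x y. dual_cells {u,v} = {x,y} \<and> x \<noteq> y"
      using assms unfolding LE_def
    proof (elim UnE CollectE exE conjE)
      fix b j assume "{u,v} = dE b j"
      then show ?thesis by (intro exI[of _ "(j+1,b)"] exI[of _ "(j,b+1)"]) (simp add: dc_dE)
    next
      fix b j assume "{u,v} = vE b j"
      then show ?thesis by (intro exI[of _ "(j,b)"] exI[of _ "(j,b+1)"]) (simp add: dc_vE)
    next
      fix b j assume "{u,v} = hE b j"
      then show ?thesis by (intro exI[of _ "(j,b)"] exI[of _ "(j+1,b)"]) (simp add: dc_hE)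
    qed
    ultimately show ?thesis by metis
  qed
  then show ?thesis unfolding lat_adj_def by auto
qed

lemma lat_adj_iff: "lat_adj u v \<longleftrightarrow> {u,v} \<in> LE"
  using lat_adj_imp_LE LE_imp_lat_adj by blast

definition ind :: "bool \<Rightarrow> nat" where "ind P = (if P then 1 else 0)"

definition sixL :: "int \<Rightarrow> int \<Rightarrow> vert set list" where
  "sixL a b = [dE b (a-1), vE b a, hE b a, dE (b-1) a, vE (b-1) a, hE b (a-1)]"

lemma sixL_distinct: "distinct (sixL a b)"
  by (simp add: sixL_def dE_def vE_def hE_def doubleton_eq_iff)

lemma LE_cell:
  assumes "e \<in> LE"
  shows "(a,b) \<in> dual_cells e \<longleftrightarrow> e \<in> set (sixL a b)"
proof
  assume "(a,b) \<in> dual_cells e"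
  then show "e \<in> set (sixL a b)" using assms unfolding LE_def sixL_def
    by (auto simp: dc_dE dc_vE dc_hE)
next
  assume "e \<in> set (sixL a b)"
  then show "(a,b) \<in> dual_cells e" unfolding sixL_def
    by (auto simp: dc_dE dc_vE dc_hE)
qed

lemma card_Int_distinct_list:
  "distinct xs \<Longrightarrow> card (F \<inter> set xs) = sum_list (map (\<lambda>e. ind (e \<in> F)) xs)"
proof (induction xs)
  case Nil then show ?case by simp
next
  case (Cons x xs)
  have fin: "finite (F \<inter> set xs)" by simp
  show ?case using Cons fin by (auto simp: Int_insert_right ind_def)
qed

definition par :: "vert set set \<Rightarrow> cell \<Rightarrow> nat" where
  "par F c = card {e\<in>F. c \<in> dual_cells e}"

lemma par_six:
  assumes "F \<subseteq> LE"
  shows "par F (a,b) = sum_list (map (\<lambda>e. ind (e \<in> F)) (sixL a b))"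
proof -
  have "{e\<in>F. (a,b) \<in> dual_cells e} = F \<inter> set (sixL a b)"
    using LE_cell assms by blast
  then show ?thesis unfolding par_def using card_Int_distinct_list[OF sixL_distinct] by simp
qed

lemma ex_doubleton: "(\<exists>u v. {x,y} = {u,v} \<and> f u \<noteq> f v) \<longleftrightarrow> f x \<noteq> f y"
  by (auto simp: doubleton_eq_iff)

lemma inj_dE: "inj (dE b)" by (auto simp: inj_def dE_def doubleton_eq_iff)
lemma inj_vE: "inj (vE b)" by (auto simp: inj_def vE_def doubleton_eq_iff)
lemma inj_hE: "inj (hE b)" by (auto simp: inj_def hE_def doubleton_eq_iff)

lemma fin_dE: "finite F \<Longrightarrow> finite {j. dE b j \<in> F}"
  using finite_vimageI[OF _ inj_dE] by (simp add: vimage_def)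
lemma fin_vE: "finite F \<Longrightarrow> finite {j. vE b j \<in> F}"
  using finite_vimageI[OF _ inj_vE] by (simp add: vimage_def)
lemma fin_hE: "finite F \<Longrightarrow> finite {j. hE b j \<in> F}"
  using finite_vimageI[OF _ inj_hE] by (simp add: vimage_def)

lemma cnt_rec:
  assumes "finite {j::int. P j}"
  shows "card {j. j \<ge> a \<and> P j} = ind (P a) + card {j. j \<ge> a + 1 \<and> P j}"
proof -
  have fin: "finite {j. j \<ge> a + 1 \<and> P j}" using assms by (rule rev_finite_subset) auto
  show ?thesis
  proof (cases "P a")
    case True
    then have "{j. j \<ge> a \<and> P j} = insert a {j. j \<ge> a + 1 \<and> P j}" by auto
    then show ?thesis using fin True by (simp add: ind_def)
  next
    case False
    have "j \<ge> a \<and> P j \<longleftrightarrow> j \<ge> a + 1 \<and> P j" for j using False by (cases "j = a") auto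
    then have "{j. j \<ge> a \<and> P j} = {j. j \<ge> a + 1 \<and> P j}" by simp
    then show ?thesis using False by (simp add: ind_def)
  qed
qed

lemma cnt_vanish:
  assumes "finite {j::int. P j}"
  shows "\<exists>M. \<forall>a\<ge>M. card {j. j \<ge> a \<and> P j} = 0 \<and> \<not> P a"
proof -
  define M where "M = Max (insert 0 {j. P j})"
  have M: "\<forall>x\<in>{j. P j}. x \<le> M" unfolding M_def using assms by simp
  show ?thesis
  proof (intro exI[of _ "M+1"] allI impI)
    fix a assume "a \<ge> M + 1"
    then have e: "{j. j \<ge> a \<and> P j} = {}" using M by force
    moreover have "\<not> P a"
    proof
      assume "P a" then have "a \<le> M" using M by blast
      then show False using \<open>a \<ge> M+1\<close> by simp
    qed
    moreover have "card {j. j \<ge> a \<and> P j} = 0" by (simp only: e card.empty)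
    ultimately show "card {j. j \<ge> a \<and> P j} = 0 \<and> \<not> P a" by blast
  qed
qed

context
  fixes F :: "vert set set"
  assumes finF: "finite F" and FLE: "F \<subseteq> LE" and evF: "\<forall>c. even (par F c)"
begin

definition cD where "cD b a = card {j. j \<ge> a \<and> dE b j \<in> F}"
definition cV where "cV b a = card {j. j \<ge> a \<and> vE b j \<in> F}"

definition lside :: "vert \<Rightarrow> bool" where
  "lside v = (case v of (a,b,s) \<Rightarrow>
     (if s then odd (cD b (a+1) + cV b (a+1)) else odd (cD b a + cV b (a+1))))"

lemma cD_rec: "cD b a = ind (dE b a \<in> F) + cD b (a+1)"
  unfolding cD_def by (rule cnt_rec[OF fin_dE[OF finF]])
lemma cV_rec: "cV b a = ind (vE b a \<in> F) + cV b (a+1)"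
  unfolding cV_def by (rule cnt_rec[OF fin_vE[OF finF]])

lemma lside_dE: "dE b j \<in> F \<longleftrightarrow> lside (j,b,False) \<noteq> lside (j,b,True)"
  unfolding lside_def using cD_rec[of b j] by (auto simp: ind_def)

lemma lside_vE: "vE b j \<in> F \<longleftrightarrow> lside (j-1,b,True) \<noteq> lside (j,b,False)"
  unfolding lside_def using cV_rec[of b j] by (auto simp: ind_def)

definition G where "G b k = ind (hE b k \<in> F) + cD b k + cV b (k+1) + cD (b-1) (k+1) + cV (b-1) (k+1)"

lemma G_step: "even (G b k) \<longleftrightarrow> even (G b (k+1))"
proof -
  have ev: "even (par F (k+1,b))" using evF by (rule spec)
  have p: "par F (k+1,b) = ind (dE b k \<in> F) + ind (vE b (k+1) \<in> F) + ind (hE b (k+1) \<in> F)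
     + ind (dE (b-1) (k+1) \<in> F) + ind (vE (b-1) (k+1) \<in> F) + ind (hE b k \<in> F)"
    using par_six[OF FLE, of "k+1" b] unfolding sixL_def by simp
  have "G b k + 2 * ind (hE b (k+1) \<in> F) = par F (k+1,b) + G b (k+1)"
    unfolding p G_def using cD_rec[of b k] cV_rec[of b "k+1"] cD_rec[of "b-1" "k+1"] cV_rec[of "b-1" "k+1"]
    by linarith
  then have "even (G b k + 2 * ind (hE b (k+1) \<in> F)) \<longleftrightarrow> even (par F (k+1,b) + G b (k+1))"
    by (rule arg_cong)
  then show ?thesis using ev by (simp only: even_add even_mult_iff even_numeral simp_thms)
qed

lemma G_even: "even (G b k)"
proof -
  obtain M1 where M1: "\<forall>a\<ge>M1. card {j. j \<ge> a \<and> dE b j \<in> F} = 0" using cnt_vanish[OF fin_dE[OF finF]] by blast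
  obtain M2 where M2: "\<forall>a\<ge>M2. card {j. j \<ge> a \<and> vE b j \<in> F} = 0" using cnt_vanish[OF fin_vE[OF finF]] by blast
  obtain M3 where M3: "\<forall>a\<ge>M3. card {j. j \<ge> a \<and> dE (b-1) j \<in> F} = 0" using cnt_vanish[OF fin_dE[OF finF]] by blast
  obtain M4 where M4: "\<forall>a\<ge>M4. card {j. j \<ge> a \<and> vE (b-1) j \<in> F} = 0" using cnt_vanish[OF fin_vE[OF finF]] by blast
  obtain M5 where M5: "\<forall>a\<ge>M5. \<not> hE b a \<in> F" using cnt_vanish[OF fin_hE[OF finF]] by blast
  define K where "K = max (max M1 M2) (max (max M3 M4) M5)"
  have big: "G b k = 0" if "k \<ge> K" for k
  proof -
    have "cD b k = 0" using M1 that unfolding cD_def K_def by simp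
    moreover have "cV b (k+1) = 0" using M2 that unfolding cV_def K_def by simp
    moreover have "cD (b-1) (k+1) = 0" using M3 that unfolding cD_def K_def by simp
    moreover have "cV (b-1) (k+1) = 0" using M4 that unfolding cV_def K_def by simp
    moreover have "\<not> hE b k \<in> F" using M5 that unfolding K_def by simp
    ultimately show ?thesis unfolding G_def by (simp add: ind_def)
  qed
  have ind: "even (G b (K - int n))" for n
  proof (induction n)
    case 0 then show ?case using big by simp
  next
    case (Suc n)
    have "K - int (Suc n) + 1 = K - int n" by simp
    then show ?case using G_step[of b "K - int (Suc n)"] Suc by simp
  qed
  show ?thesis
  proof (cases "k \<ge> K")
    case True then show ?thesis using big by simp
  next
    case False
    then have "k = K - int (nat (K - k))" by simp
    then show ?thesis using ind by metis
  qed
qed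

lemma lside_hE: "hE b j \<in> F \<longleftrightarrow> lside (j,b,False) \<noteq> lside (j,b-1,True)"
  using G_even[of b j] unfolding lside_def G_def by (auto simp: ind_def split: if_splits)


lemma lattice_cut:
  assumes "e \<in> LE"
  shows "e \<in> F \<longleftrightarrow> (\<exists>u v. e = {u,v} \<and> lside u \<noteq> lside v)"
  using assms unfolding LE_def
proof (elim UnE CollectE exE conjE)
  fix b j assume e: "e = dE b j"
  show ?thesis unfolding e using lside_dE[of b j] by (simp only: dE_def ex_doubleton)
next
  fix b j assume e: "e = vE b j"
  show ?thesis unfolding e using lside_vE[of b j] by (simp only: vE_def ex_doubleton)
next
  fix b j assume e: "e = hE b j"
  show ?thesis unfolding e using lside_hE[of b j] by (simp only: hE_def ex_doubleton)
qed

end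

definition gdeg :: "('e \<Rightarrow> 'v set) \<Rightarrow> 'e set \<Rightarrow> 'v \<Rightarrow> nat" where
  "gdeg ends D v = card {e\<in>D. v \<in> ends e}"

lemma dual_cells_pair: "dual_cells {u,v} = tri u \<inter> tri v"
  by (simp add: dual_cells_def)

lemma hs_edgesE:
  assumes "e \<in> hs_edges S"
  obtains u v where "e = {u,v}" "lat_adj u v" "dual_cells e \<inter> S \<noteq> {}"
proof -
  from assms obtain u v where "e = {u,v}" "lat_adj u v" "tri u \<inter> tri v \<inter> S \<noteq> {}"
    unfolding hs_edges_def by blast
  then show thesis using that by (simp add: dual_cells_pair)
qed

lemma hs_edges_LE: "hs_edges S \<subseteq> LE"
proof
  fix e assume "e \<in> hs_edges S"
  then obtain u v where "e = {u,v}" "lat_adj u v" by (rule hs_edgesE)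
  then show "e \<in> LE" using lat_adj_iff by simp
qed

lemma hs_edges_S: "e \<in> hs_edges S \<Longrightarrow> dual_cells e \<inter> S \<noteq> {}"
  by (erule hs_edgesE) simp


lemma LE_cells:
  assumes "e \<in> LE" obtains x y where "dual_cells e = {x,y}" "x \<noteq> y"
  using assms unfolding LE_def by (auto simp: dc_dE dc_vE dc_hE)

lemma LE_pair:
  assumes "e \<in> LE" obtains u v where "e = {u,v}" "black u" "\<not> black v"
  using assms unfolding LE_def
proof (elim UnE CollectE exE conjE)
  fix b j assume "e = dE b j"
  then show thesis using that[of "(j,b,False)" "(j,b,True)"] by (simp add: dE_def black_def)
next
  fix b j assume "e = vE b j"
  then show thesis using that[of "(j,b,False)" "(j-1,b,True)"] by (simp add: vE_def black_def insert_commute)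
next
  fix b j assume "e = hE b j"
  then show thesis using that[of "(j,b,False)" "(j,b-1,True)"] by (simp add: hE_def black_def)
qed

lemma LE_hs_edges: "e \<in> LE \<Longrightarrow> dual_cells e \<inter> S \<noteq> {} \<Longrightarrow> e \<in> hs_edges S"
proof -
  assume e: "e \<in> LE" "dual_cells e \<inter> S \<noteq> {}"
  obtain u v where uv: "e = {u,v}" using LE_pair[OF e(1)] by metis
  have "lat_adj u v" using e(1) uv lat_adj_iff by simp
  moreover have "tri u \<inter> tri v \<inter> S \<noteq> {}" using e(2) uv by (simp add: dual_cells_pair)
  ultimately show ?thesis unfolding hs_edges_def uv by blast
qed

lemma lat_adj_black: "lat_adj u v \<Longrightarrow> black u \<noteq> black v"
proof -
  assume "lat_adj u v"
  then have "{u,v} \<in> LE" using lat_adj_iff by simp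
  then obtain x y where "{u,v} = {x,y}" "black x" "\<not> black y" by (rule LE_pair)
  then show ?thesis by (auto simp: doubleton_eq_iff)
qed

lemma hs_edges_verts: "e \<in> hs_edges S \<Longrightarrow> e \<subseteq> hs_verts S"
  unfolding hs_edges_def hs_verts_def by auto

lemma dual_ends_Some: "Some c \<in> dual_ends S e \<longleftrightarrow> c \<in> dual_cells e \<and> c \<in> S"
  unfolding dual_ends_def by auto

lemma dual_ends_None: "None \<in> dual_ends S e \<longleftrightarrow> (\<exists>c\<in>dual_cells e. c \<notin> S)"
  unfolding dual_ends_def by auto

lemma card_dual_ends:
  assumes "e \<in> hs_edges S" shows "card (dual_ends S e) = 2"
proof -
  have "e \<in> LE" using assms hs_edges_LE by blast
  then obtain x y where xy: "dual_cells e = {x,y}" "x \<noteq> y" by (rule LE_cells)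
  have "dual_cells e \<inter> S \<noteq> {}" using assms by (rule hs_edges_S)
  have de: "dual_ends S e = {if x \<in> S then Some x else None, if y \<in> S then Some y else None}"
    unfolding dual_ends_def xy by simp
  show ?thesis unfolding de using xy \<open>dual_cells e \<inter> S \<noteq> {}\<close>
    by (cases "x \<in> S"; cases "y \<in> S") simp_all
qed

lemma card_cells_S:
  assumes "e \<in> hs_edges S"
  shows "card (dual_cells e \<inter> S) = (if None \<in> dual_ends S e then 1 else 2)"
proof -
  have "e \<in> LE" using assms hs_edges_LE by blast
  then obtain x y where xy: "dual_cells e = {x,y}" "x \<noteq> y" by (rule LE_cells)
  have "dual_cells e \<inter> S \<noteq> {}" using assms by (rule hs_edges_S)
  then show ?thesis unfolding dual_ends_None xy using xy(2)
    by (cases "x \<in> S"; cases "y \<in> S") (simp_all add: Int_insert_left)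
qed

lemma card_cells_nS:
  assumes "e \<in> hs_edges S"
  shows "card (dual_cells e - S) = (if None \<in> dual_ends S e then 1 else 0)"
proof -
  have "e \<in> LE" using assms hs_edges_LE by blast
  then obtain x y where xy: "dual_cells e = {x,y}" "x \<noteq> y" by (rule LE_cells)
  have "dual_cells e \<inter> S \<noteq> {}" using assms by (rule hs_edges_S)
  then show ?thesis unfolding dual_ends_None xy using xy(2)
    by (cases "x \<in> S"; cases "y \<in> S") (simp_all add: insert_Diff_if)
qed

lemma card_filter_ind: "finite D \<Longrightarrow> card {e\<in>D. P e} = (\<Sum>e\<in>D. ind (P e))"
  using sum.inter_filter[of D "\<lambda>_. 1::nat" P] by (simp add: ind_def)

lemma double_count:
  assumes "finite A" "finite D"
  shows "(\<Sum>c\<in>A. card {e\<in>D. c \<in> g e}) = (\<Sum>e\<in>D. card (g e \<inter> A))"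
proof -
  have "(\<Sum>c\<in>A. card {e\<in>D. c \<in> g e}) = (\<Sum>c\<in>A. \<Sum>e\<in>D. ind (c \<in> g e))"
    using assms by (simp add: card_filter_ind)
  also have "\<dots> = (\<Sum>e\<in>D. \<Sum>c\<in>A. ind (c \<in> g e))" by (rule sum.swap)
  also have "\<dots> = (\<Sum>e\<in>D. card (g e \<inter> A))"
  proof (rule sum.cong)
    fix e assume "e \<in> D"
    have "g e \<inter> A = {c\<in>A. c \<in> g e}" by auto
    then show "(\<Sum>c\<in>A. ind (c \<in> g e)) = card (g e \<inter> A)"
      using assms by (simp add: card_filter_ind)
  qed simp
  finally show ?thesis .
qed

definition cutset :: "cell set \<Rightarrow> (vert \<Rightarrow> bool) \<Rightarrow> vert set set" where
  "cutset S p = {e \<in> hs_edges S. \<exists>u v. e = {u,v} \<and> p u \<noteq> p v}"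

lemma cyc6: fixes p0 p1 p2 p3 p4 p5 :: bool shows "even (ind (p0 \<noteq> p1) + ind (p1 \<noteq> p2) + ind (p2 \<noteq> p3) + ind (p4 \<noteq> p3) + ind (p5 \<noteq> p4) + ind (p0 \<noteq> p5))"
  by (cases p0; cases p1; cases p2; cases p3; cases p4; cases p5) (simp_all add: ind_def)

lemma cutset_LE: "cutset S p \<subseteq> LE"
  unfolding cutset_def using hs_edges_LE by blast

lemma cut_even_cell:
  assumes c: "(a,b) \<in> S"
  shows "even (par (cutset S p) (a,b))"
proof -
  let ?C = "cutset S p"
  have mem: "e \<in> hs_edges S" if "e \<in> set (sixL a b)" for e
  proof -
    have "e \<in> LE" using that unfolding sixL_def by (auto intro: dE_LE vE_LE hE_LE)
    moreover have "(a,b) \<in> dual_cells e" using LE_cell[OF \<open>e \<in> LE\<close>] that by blast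
    ultimately show ?thesis using LE_hs_edges c by blast
  qed
  have memC: "{x,y} \<in> ?C \<longleftrightarrow> p x \<noteq> p y" if "{x,y} \<in> hs_edges S" for x y
    using that unfolding cutset_def mem_Collect_eq ex_doubleton[of x y p] by simp
  have s: "set (sixL a b) = {dE b (a-1), vE b a, hE b a, dE (b-1) a, vE (b-1) a, hE b (a-1)}"
    by (simp add: sixL_def)
  have e1: "ind (dE b (a-1) \<in> ?C) = ind (p (a-1,b,False) \<noteq> p (a-1,b,True))"
    using memC[of "(a-1,b,False)" "(a-1,b,True)"] mem[of "dE b (a-1)"] s by (simp add: dE_def)
  have e2: "ind (vE b a \<in> ?C) = ind (p (a-1,b,True) \<noteq> p (a,b,False))"
    using memC[of "(a-1,b,True)" "(a,b,False)"] mem[of "vE b a"] s by (simp add: vE_def)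
  have e3: "ind (hE b a \<in> ?C) = ind (p (a,b,False) \<noteq> p (a,b-1,True))"
    using memC[of "(a,b,False)" "(a,b-1,True)"] mem[of "hE b a"] s by (simp add: hE_def)
  have e4: "ind (dE (b-1) a \<in> ?C) = ind (p (a,b-1,False) \<noteq> p (a,b-1,True))"
    using memC[of "(a,b-1,False)" "(a,b-1,True)"] mem[of "dE (b-1) a"] s by (simp add: dE_def)
  have e5: "ind (vE (b-1) a \<in> ?C) = ind (p (a-1,b-1,True) \<noteq> p (a,b-1,False))"
    using memC[of "(a-1,b-1,True)" "(a,b-1,False)"] mem[of "vE (b-1) a"] s by (simp add: vE_def)
  have e6: "ind (hE b (a-1) \<in> ?C) = ind (p (a-1,b,False) \<noteq> p (a-1,b-1,True))"
    using memC[of "(a-1,b,False)" "(a-1,b-1,True)"] mem[of "hE b (a-1)"] s by (simp add: hE_def)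
  have "par ?C (a,b) = ind (dE b (a-1) \<in> ?C) + ind (vE b a \<in> ?C) + ind (hE b a \<in> ?C)
      + ind (dE (b-1) a \<in> ?C) + ind (vE (b-1) a \<in> ?C) + ind (hE b (a-1) \<in> ?C)"
    using par_six[OF cutset_LE[of S p], where a=a and b=b] unfolding sixL_def by simp
  then show ?thesis unfolding e1 e2 e3 e4 e5 e6 using cyc6 by metis
qed

lemma fin_hs_edges: "finite (hs_verts S) \<Longrightarrow> finite (hs_edges S)"
  by (rule finite_subset[of _ "Pow (hs_verts S)"]) (auto dest: hs_edges_verts)

lemma parity_None:
  assumes finS: "finite S" and finV: "finite (hs_verts S)" and DE: "D \<subseteq> hs_edges S"
    and ev: "\<forall>c\<in>S. even (par D c)"
  shows "even (card {e\<in>D. None \<in> dual_ends S e})"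
proof -
  have finD: "finite D" using fin_hs_edges[OF finV] DE by (rule finite_subset[rotated])
  have "(\<Sum>c\<in>S. par D c) = (\<Sum>e\<in>D. card (dual_cells e \<inter> S))"
    unfolding par_def by (rule double_count[OF finS finD])
  also have "\<dots> = (\<Sum>e\<in>D. if None \<in> dual_ends S e then 1 else 2)"
  proof (rule sum.cong)
    fix e assume "e \<in> D"
    then have "e \<in> hs_edges S" using DE by blast
    then show "card (dual_cells e \<inter> S) = (if None \<in> dual_ends S e then 1 else 2)" by (rule card_cells_S)
  qed simp
  also have "\<dots> = card (D \<inter> {e. None \<in> dual_ends S e}) + 2 * card (D \<inter> - {e. None \<in> dual_ends S e})"
    using sum.If_cases[OF finD, of "\<lambda>e. None \<in> dual_ends S e" "\<lambda>_. 1::nat" "\<lambda>_. 2"]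
    by (simp only: sum_constant) simp
  finally have eq: "(\<Sum>c\<in>S. par D c) = card (D \<inter> {e. None \<in> dual_ends S e}) + 2 * card (D \<inter> - {e. None \<in> dual_ends S e})" .
  have "even (\<Sum>c\<in>S. par D c)" using ev by (intro dvd_sum) blast
  then have "even (card (D \<inter> {e. None \<in> dual_ends S e}))" unfolding eq by simp
  moreover have "D \<inter> {e. None \<in> dual_ends S e} = {e\<in>D. None \<in> dual_ends S e}" by auto
  ultimately show ?thesis by simp
qed

lemma gdeg_Some:
  "gdeg (dual_ends S) D (Some c) = (if c \<in> S then par D c else 0)"
proof (cases "c \<in> S")
  case True
  then have "{e\<in>D. Some c \<in> dual_ends S e} = {e\<in>D. c \<in> dual_cells e}" using dual_ends_Some by blast
  then show ?thesis using True unfolding gdeg_def par_def by simp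
next
  case False
  then have "{e\<in>D. Some c \<in> dual_ends S e} = {}" using dual_ends_Some by blast
  then show ?thesis using False unfolding gdeg_def by (simp only: card.empty if_False)
qed

lemma gdeg_None: "gdeg (dual_ends S) D None = card {e\<in>D. None \<in> dual_ends S e}"
  unfolding gdeg_def by simp

lemma cut_even:
  assumes finS: "finite S" and finV: "finite (hs_verts S)"
  shows "even (gdeg (dual_ends S) (cutset S p) x)"
proof (cases x)
  case None
  have "\<forall>c\<in>S. even (par (cutset S p) c)" using cut_even_cell by auto
  moreover have "cutset S p \<subseteq> hs_edges S" unfolding cutset_def by blast
  ultimately show ?thesis unfolding None gdeg_None
    using parity_None[OF finS finV] by blast
next
  case (Some c)
  obtain a b where c: "c = (a,b)" by (cases c)
  show ?thesis unfolding Some c gdeg_Some using cut_even_cell[of a b S p] by simp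
qed

definition symd :: "'a set \<Rightarrow> 'a set \<Rightarrow> 'a set" where "symd A B = (A - B) \<union> (B - A)"

lemma card_symd_filter:
  assumes "finite A" "finite B"
  shows "card {e\<in>symd A B. P e} + 2 * card {e\<in>A \<inter> B. P e} = card {e\<in>A. P e} + card {e\<in>B. P e}"
proof -
  let ?A = "{e\<in>A. P e}" and ?B = "{e\<in>B. P e}"
  have fA: "finite ?A" and fB: "finite ?B" using assms by auto
  have s: "{e\<in>symd A B. P e} = (?A - ?B) \<union> (?B - ?A)" unfolding symd_def by auto
  have i: "{e\<in>A \<inter> B. P e} = ?A \<inter> ?B" by auto
  have c1: "card (?A - ?B) + card (?A \<inter> ?B) = card ?A"
  proof -
    have "?A = (?A - ?B) \<union> (?A \<inter> ?B)" by auto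
    then have "card ?A = card ((?A - ?B) \<union> (?A \<inter> ?B))" by simp
    also have "\<dots> = card (?A - ?B) + card (?A \<inter> ?B)" using fA by (intro card_Un_disjoint) auto
    finally show ?thesis by simp
  qed
  have c2: "card (?B - ?A) + card (?A \<inter> ?B) = card ?B"
  proof -
    have "?B = (?B - ?A) \<union> (?A \<inter> ?B)" by auto
    then have "card ?B = card ((?B - ?A) \<union> (?A \<inter> ?B))" by simp
    also have "\<dots> = card (?B - ?A) + card (?A \<inter> ?B)" using fB by (intro card_Un_disjoint) auto
    finally show ?thesis by simp
  qed
  have c3: "card ((?A - ?B) \<union> (?B - ?A)) = card (?A - ?B) + card (?B - ?A)"
    using fA fB by (intro card_Un_disjoint) auto
  show ?thesis unfolding s i c3 using c1 c2 by linarith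
qed

lemma par_symd:
  assumes "finite A" "finite B"
  shows "odd (par (symd A B) c) \<longleftrightarrow> (odd (par A c) \<noteq> odd (par B c))"
proof -
  have "par (symd A B) c + 2 * card {e\<in>A \<inter> B. c \<in> dual_cells e} = par A c + par B c"
    unfolding par_def by (rule card_symd_filter[OF assms])
  then have "even (par (symd A B) c + 2 * card {e\<in>A \<inter> B. c \<in> dual_cells e}) \<longleftrightarrow> even (par A c + par B c)"
    by (rule arg_cong)
  then have "even (par (symd A B) c) \<longleftrightarrow> even (par A c + par B c)" by simp
  then show ?thesis by simp
qed

lemma par_single: "odd (par {e} c) \<longleftrightarrow> c \<in> dual_cells e"
proof (cases "c \<in> dual_cells e")
  case True
  then have h: "{x\<in>{e}. c \<in> dual_cells x} = {e}" by auto
  show ?thesis using True unfolding par_def h by simp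
next
  case False
  then have h: "{x\<in>{e}. c \<in> dual_cells x} = {}" by auto
  show ?thesis using False unfolding par_def h by simp
qed

lemma par_empty: "par {} c = 0" unfolding par_def by simp

lemma cell_adj_LE:
  assumes "cell_adj x y"
  shows "\<exists>e\<in>LE. dual_cells e = {x,y}"
proof -
  obtain a b where x: "x = (a,b)" by (cases x)
  obtain a' b' where y: "y = (a',b')" by (cases y)
  have "(a' - a, b' - b) \<in> {(1, 0), (-1, 0), (0, 1), (0, -1), (1, -1), (-1, 1)}"
    using assms unfolding cell_adj_def x y by simp
  then have "(a' = a+1 \<and> b' = b) \<or> (a' = a-1 \<and> b' = b) \<or> (a' = a \<and> b' = b+1) \<or>
     (a' = a \<and> b' = b-1) \<or> (a' = a+1 \<and> b' = b-1) \<or> (a' = a-1 \<and> b' = b+1)"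
    unfolding insert_iff empty_iff prod.inject by (elim disjE conjE) simp_all
  then show ?thesis
  proof (elim disjE conjE)
    assume "a' = a+1" "b' = b"
    then show ?thesis by (intro bexI[of _ "hE b a"] hE_LE) (auto simp: dc_hE x y)
  next
    assume "a' = a-1" "b' = b"
    then show ?thesis by (intro bexI[of _ "hE b (a-1)"] hE_LE) (auto simp: dc_hE x y)
  next
    assume "a' = a" "b' = b+1"
    then show ?thesis by (intro bexI[of _ "vE b a"] vE_LE) (auto simp: dc_vE x y)
  next
    assume "a' = a" "b' = b-1"
    then show ?thesis by (intro bexI[of _ "vE (b-1) a"] vE_LE) (auto simp: dc_vE x y)
  next
    assume "a' = a+1" "b' = b-1"
    then show ?thesis by (intro bexI[of _ "dE (b-1) a"] dE_LE) (auto simp: dc_dE x y)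
  next
    assume "a' = a-1" "b' = b+1"
    then show ?thesis by (intro bexI[of _ "dE b (a-1)"] dE_LE) (auto simp: dc_dE x y)
  qed
qed



lemma cell_adj_neq: "cell_adj x y \<Longrightarrow> x \<noteq> y"
  unfolding cell_adj_def by auto

definition goodJ :: "cell set \<Rightarrow> vert set set \<Rightarrow> bool" where
  "goodJ S J \<longleftrightarrow> finite J \<and> J \<subseteq> LE \<and> (\<forall>e\<in>J. dual_cells e \<inter> S = {})"

lemma goodJ_symd: "goodJ S A \<Longrightarrow> goodJ S B \<Longrightarrow> goodJ S (symd A B)"
  unfolding goodJ_def symd_def by auto

lemma join:
  assumes "(x,y) \<in> {(x, y). cell_adj x y \<and> x \<notin> S \<and> y \<notin> S}\<^sup>*"
  shows "\<exists>J. goodJ S J \<and> (\<forall>c. odd (par J c) \<longleftrightarrow> ((c = x) \<noteq> (c = y)))"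
  using assms
proof (induction rule: rtrancl_induct)
  case base
  have "goodJ S {} \<and> (\<forall>c. odd (par {} c) \<longleftrightarrow> ((c = x) \<noteq> (c = x)))" unfolding goodJ_def by (simp add: par_empty)
  then show ?case by (rule exI)
next
  case (step y z)
  obtain J where J: "goodJ S J" "\<forall>c. odd (par J c) \<longleftrightarrow> ((c = x) \<noteq> (c = y))" using step.IH by (elim exE conjE)
  have yz: "cell_adj y z" "y \<notin> S" "z \<notin> S" using step.hyps(2) by auto
  obtain e where e: "e \<in> LE" "dual_cells e = {y,z}" using cell_adj_LE[OF yz(1)] by blast
  have ge: "goodJ S {e}" unfolding goodJ_def using e yz by auto
  have neq: "y \<noteq> z" using cell_adj_neq[OF yz(1)] .
  have fJ: "finite J" using J(1) unfolding goodJ_def by simp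
  have "odd (par (symd J {e}) c) \<longleftrightarrow> ((c = x) \<noteq> (c = z))" for c
  proof -
    have "odd (par (symd J {e}) c) \<longleftrightarrow> (odd (par J c) \<noteq> odd (par {e} c))"
      using par_symd[OF fJ, of "{e}" c] by simp
    also have "\<dots> \<longleftrightarrow> (((c = x) \<noteq> (c = y)) \<noteq> (c = y \<or> c = z))"
      using J(2)[rule_format, of c] par_single[of e c] e(2) by simp
    also have "\<dots> \<longleftrightarrow> ((c = x) \<noteq> (c = z))" using neq by auto
    finally show ?thesis .
  qed
  then have "goodJ S (symd J {e}) \<and> (\<forall>c. odd (par (symd J {e}) c) \<longleftrightarrow> ((c = x) \<noteq> (c = z)))"
    using goodJ_symd[OF J(1) ge] by simp
  then show ?case by (rule exI)
qed

lemma pairing: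
  assumes conn: "\<forall>c d. c \<notin> S \<longrightarrow> d \<notin> S \<longrightarrow> (c, d) \<in> {(x, y). cell_adj x y \<and> x \<notin> S \<and> y \<notin> S}\<^sup>*"
  shows "finite Od \<Longrightarrow> even (card Od) \<Longrightarrow> Od \<inter> S = {} \<Longrightarrow> \<exists>J. goodJ S J \<and> (\<forall>c. odd (par J c) \<longleftrightarrow> c \<in> Od)"
proof (induction "card Od" arbitrary: Od rule: less_induct)
  case less
  show ?case
  proof (cases "Od = {}")
    case True
    have "goodJ S {} \<and> (\<forall>c. odd (par {} c) \<longleftrightarrow> c \<in> Od)" unfolding goodJ_def using True by (simp add: par_empty)
    then show ?thesis by (rule exI)
  next
    case False
    then obtain x where x: "x \<in> Od" by blast
    have "card Od \<noteq> 0" using False less.prems(1) by simp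
    then have "card Od \<ge> 2" using less.prems(2) by presburger
    then have "card (Od - {x}) \<noteq> 0" using x less.prems(1) by simp
    then have "Od - {x} \<noteq> {}" by (metis card.empty)
    then obtain y where y: "y \<in> Od" "y \<noteq> x" by blast
    let ?Od = "Od - {x,y}"
    have cO: "card ?Od = card Od - 2" using x y less.prems(1) by (simp add: card_Diff_subset)
    have lt: "card ?Od < card Od" using cO \<open>card Od \<ge> 2\<close> by simp
    have ev: "even (card ?Od)" using cO less.prems(2) \<open>card Od \<ge> 2\<close> by simp
    have fin: "finite ?Od" using less.prems(1) by simp
    have int: "?Od \<inter> S = {}" using less.prems(3) by blast
    have "\<exists>J. goodJ S J \<and> (\<forall>c. odd (par J c) \<longleftrightarrow> c \<in> ?Od)"
      by (rule less.hyps[OF lt fin ev int])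
    then obtain J1 where J1: "goodJ S J1" "\<forall>c. odd (par J1 c) \<longleftrightarrow> c \<in> ?Od" by (elim exE conjE)
    have "x \<notin> S" "y \<notin> S" using x y less.prems(3) by auto
    have "(x,y) \<in> {(x, y). cell_adj x y \<and> x \<notin> S \<and> y \<notin> S}\<^sup>*"
      using conn[rule_format, OF \<open>x \<notin> S\<close> \<open>y \<notin> S\<close>] .
    then have "\<exists>J. goodJ S J \<and> (\<forall>c. odd (par J c) \<longleftrightarrow> ((c = x) \<noteq> (c = y)))" by (rule join)
    then obtain J2 where J2: "goodJ S J2" "\<forall>c. odd (par J2 c) \<longleftrightarrow> ((c = x) \<noteq> (c = y))"
      by (elim exE conjE)
    have f: "finite J1" "finite J2" using J1(1) J2(1) unfolding goodJ_def by auto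
    have "odd (par (symd J1 J2) c) \<longleftrightarrow> c \<in> Od" for c
    proof -
      have "odd (par (symd J1 J2) c) \<longleftrightarrow> (c \<in> ?Od) \<noteq> ((c = x) \<noteq> (c = y))"
        using par_symd[OF f, of c] J1(2)[rule_format, of c] J2(2)[rule_format, of c] by simp
      also have "\<dots> \<longleftrightarrow> c \<in> Od" using x y by auto
      finally show ?thesis .
    qed
    then have "goodJ S (symd J1 J2) \<and> (\<forall>c. odd (par (symd J1 J2) c) \<longleftrightarrow> c \<in> Od)"
      using goodJ_symd[OF J1(1) J2(1)] by simp
    then show ?thesis by (rule exI)
  qed
qed

lemma even_sum_card:
  fixes f :: "'a \<Rightarrow> nat"
  assumes "finite A"
  shows "even (sum f A) \<longleftrightarrow> even (card {x\<in>A. odd (f x)})"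
  using assms
proof (induction A rule: finite_induct)
  case empty then show ?case by simp
next
  case (insert x F)
  have fF: "finite {y\<in>F. odd (f y)}" using insert.hyps(1) by simp
  show ?case
  proof (cases "odd (f x)")
    case True
    then have h: "{y\<in>insert x F. odd (f y)} = insert x {y\<in>F. odd (f y)}" by auto
    have "x \<notin> {y\<in>F. odd (f y)}" using insert.hyps(2) by simp
    then show ?thesis unfolding h using insert.hyps insert.IH True fF by simp
  next
    case False
    then have h: "{y\<in>insert x F. odd (f y)} = {y\<in>F. odd (f y)}" by auto
    show ?thesis unfolding h using insert.hyps insert.IH False by simp
  qed
qed

lemma even_is_cut:
  assumes finS: "finite S" and finV: "finite (hs_verts S)"
    and conn: "\<forall>c d. c \<notin> S \<longrightarrow> d \<notin> S \<longrightarrow> (c, d) \<in> {(x, y). cell_adj x y \<and> x \<notin> S \<and> y \<notin> S}\<^sup>*"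
    and DE: "D \<subseteq> hs_edges S" and ev: "\<forall>x. even (gdeg (dual_ends S) D x)"
  shows "\<exists>side. side_function S D side"
proof -
  have finD: "finite D" using fin_hs_edges[OF finV] DE by (rule finite_subset[rotated])
  define Od where "Od = {c. c \<notin> S \<and> odd (par D c)}"
  define N where "N = \<Union>(dual_cells ` D) - S"
  have finN: "finite N"
  proof -
    have "finite (dual_cells e)" if "e \<in> D" for e
    proof -
      have "e \<in> LE" using that DE hs_edges_LE by blast
      then obtain x y where "dual_cells e = {x,y}" by (rule LE_cells)
      then show ?thesis by simp
    qed
    then show ?thesis unfolding N_def using finD by blast
  qed
  have OdN: "Od = {c\<in>N. odd (par D c)}"
  proof (intro set_eqI iffI)
    fix c assume c: "c \<in> Od"
    then have "par D c \<noteq> 0" unfolding Od_def by (metis even_zero mem_Collect_eq)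
    then have "{e\<in>D. c \<in> dual_cells e} \<noteq> {}" unfolding par_def by (metis card.empty)
    then have "c \<in> \<Union>(dual_cells ` D)" by blast
    then show "c \<in> {c\<in>N. odd (par D c)}" using c unfolding Od_def N_def by blast
  next
    fix c assume "c \<in> {c\<in>N. odd (par D c)}"
    then show "c \<in> Od" unfolding Od_def N_def by blast
  qed
  have "(\<Sum>c\<in>N. par D c) = (\<Sum>e\<in>D. card (dual_cells e \<inter> N))"
    unfolding par_def by (rule double_count[OF finN finD])
  also have "\<dots> = (\<Sum>e\<in>D. ind (None \<in> dual_ends S e))"
  proof (rule sum.cong)
    fix e assume e: "e \<in> D"
    then have "dual_cells e \<inter> N = dual_cells e - S" unfolding N_def by blast
    moreover have "e \<in> hs_edges S" using e DE by blast
    ultimately show "card (dual_cells e \<inter> N) = ind (None \<in> dual_ends S e)"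
      using card_cells_nS[of e S] by (simp add: ind_def)
  qed simp
  also have "\<dots> = card {e\<in>D. None \<in> dual_ends S e}" using card_filter_ind[OF finD] by simp
  finally have sumN: "(\<Sum>c\<in>N. par D c) = gdeg (dual_ends S) D None" unfolding gdeg_None .
  have evOd: "even (card Od)"
    using ev[rule_format, of None] even_sum_card[OF finN, of "par D"] unfolding sumN OdN by simp
  have finOd: "finite Od" unfolding OdN using finN by simp
  have intOd: "Od \<inter> S = {}" unfolding Od_def by blast
  have "\<exists>J. goodJ S J \<and> (\<forall>c. odd (par J c) \<longleftrightarrow> c \<in> Od)"
    by (rule pairing[OF conn finOd evOd intOd])
  then obtain J where J: "goodJ S J" "\<forall>c. odd (par J c) \<longleftrightarrow> c \<in> Od" by (elim exE conjE)
  have finJ: "finite J" and JLE: "J \<subseteq> LE" and JS: "\<forall>e\<in>J. dual_cells e \<inter> S = {}"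
    using J(1) unfolding goodJ_def by auto
  define F where "F = D \<union> J"
  have DJ: "e \<notin> J" if "e \<in> hs_edges S" for e
    using hs_edges_S[OF that] JS by blast
  have finF: "finite F" unfolding F_def using finD finJ by simp
  have FLE: "F \<subseteq> LE" unfolding F_def using DE hs_edges_LE JLE by blast
  have parF: "par F c = par D c + par J c" for c
  proof -
    have "{e\<in>F. c \<in> dual_cells e} = {e\<in>D. c \<in> dual_cells e} \<union> {e\<in>J. c \<in> dual_cells e}"
      unfolding F_def by blast
    moreover have "{e\<in>D. c \<in> dual_cells e} \<inter> {e\<in>J. c \<in> dual_cells e} = {}" using DJ DE by blast
    ultimately show ?thesis unfolding par_def using finD finJ by (simp add: card_Un_disjoint)
  qed
  have evF: "\<forall>c. even (par F c)"
  proof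
    fix c
    show "even (par F c)"
    proof (cases "c \<in> S")
      case True
      have h: "{e\<in>J. c \<in> dual_cells e} = {}" using JS True by blast
      have "par J c = 0" unfolding par_def h by simp
      moreover have "even (par D c)" using ev[rule_format, of "Some c"] True unfolding gdeg_Some by simp
      ultimately show ?thesis unfolding parF by simp
    next
      case False
      then have "odd (par J c) \<longleftrightarrow> odd (par D c)" using J(2) unfolding Od_def by blast
      then show ?thesis unfolding parF by simp
    qed
  qed
  have "side_function S D (lside F)"
    unfolding side_function_def
  proof
    fix e assume e: "e \<in> hs_edges S"
    then have eLE: "e \<in> LE" using hs_edges_LE by blast
    have "e \<in> F \<longleftrightarrow> e \<in> D" unfolding F_def using DJ[OF e] by blast
    then show "e \<in> D \<longleftrightarrow> (\<exists>u v. e = {u, v} \<and> lside F u \<noteq> lside F v)"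
      using lattice_cut[OF finF FLE evF eLE] by simp
  qed
  then show ?thesis by (rule exI[of "side_function S D"])
qed

definition geven :: "('e \<Rightarrow> 'v set) \<Rightarrow> 'e set \<Rightarrow> bool" where
  "geven ends D \<longleftrightarrow> (\<forall>v. even (gdeg ends D v))"

definition erel :: "('e \<Rightarrow> 'v set) \<Rightarrow> 'e set \<Rightarrow> ('e \<times> 'e) set" where
  "erel ends D = {(e, f). e \<in> D \<and> f \<in> D \<and> ends e \<inter> ends f \<noteq> {}}"

definition vrel :: "('e \<Rightarrow> 'v set) \<Rightarrow> 'e set \<Rightarrow> ('v \<times> 'v) set" where
  "vrel ends D = {(a, b). \<exists>f\<in>D. ends f = {a, b}}"

lemma gdeg_symd:
  assumes "finite A" "finite B"
  shows "odd (gdeg ends (symd A B) v) \<longleftrightarrow> (odd (gdeg ends A v) \<noteq> odd (gdeg ends B v))"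
proof -
  have "gdeg ends (symd A B) v + 2 * card {e\<in>A \<inter> B. v \<in> ends e} = gdeg ends A v + gdeg ends B v"
    unfolding gdeg_def by (rule card_symd_filter[OF assms])
  then have "even (gdeg ends (symd A B) v + 2 * card {e\<in>A \<inter> B. v \<in> ends e}) \<longleftrightarrow> even (gdeg ends A v + gdeg ends B v)"
    by (rule arg_cong)
  then show ?thesis by simp
qed

lemma gdeg_single: "odd (gdeg ends {e} v) \<longleftrightarrow> v \<in> ends e"
proof (cases "v \<in> ends e")
  case True
  then have h: "{x\<in>{e}. v \<in> ends x} = {e}" by auto
  show ?thesis using True unfolding gdeg_def h by simp
next
  case False
  then have h: "{x\<in>{e}. v \<in> ends x} = {}" by auto
  show ?thesis using False unfolding gdeg_def h by simp
qed

lemma gdeg_empty: "gdeg ends {} v = 0" unfolding gdeg_def by simp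

lemma gjoin:
  assumes finD: "finite D" and w: "(r, w) \<in> (vrel ends D)\<^sup>*"
  shows "\<exists>T. T \<subseteq> D \<and> (\<forall>u. odd (gdeg ends T u) \<longleftrightarrow> ((u = r) \<noteq> (u = w)))"
  using w
proof (induction rule: rtrancl_induct)
  case base
  have "{} \<subseteq> D \<and> (\<forall>u. odd (gdeg ends {} u) \<longleftrightarrow> ((u = r) \<noteq> (u = r)))" by (simp add: gdeg_empty)
  then show ?case by (rule exI)
next
  case (step y z)
  obtain T where T: "T \<subseteq> D" "\<forall>u. odd (gdeg ends T u) \<longleftrightarrow> ((u = r) \<noteq> (u = y))"
    using step.IH by (elim exE conjE)
  obtain f where f: "f \<in> D" "ends f = {y, z}" using step.hyps(2) unfolding vrel_def by blast
  show ?case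
  proof (cases "y = z")
    case True
    then show ?thesis using T by blast
  next
    case False
    have fT: "finite T" using T(1) finD by (rule finite_subset)
    have "odd (gdeg ends (symd T {f}) u) \<longleftrightarrow> ((u = r) \<noteq> (u = z))" for u
    proof -
      have "odd (gdeg ends (symd T {f}) u) \<longleftrightarrow> (odd (gdeg ends T u) \<noteq> odd (gdeg ends {f} u))"
        using gdeg_symd[OF fT, of "{f}" ends u] by simp
      also have "\<dots> \<longleftrightarrow> (((u = r) \<noteq> (u = y)) \<noteq> (u = y \<or> u = z))"
        using T(2)[rule_format, of u] gdeg_single[of ends f u] f(2) by simp
      also have "\<dots> \<longleftrightarrow> ((u = r) \<noteq> (u = z))" using False by auto
      finally show ?thesis .
    qed
    moreover have "symd T {f} \<subseteq> D" using T(1) f(1) unfolding symd_def by blast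
    ultimately have "symd T {f} \<subseteq> D \<and> (\<forall>u. odd (gdeg ends (symd T {f}) u) \<longleftrightarrow> ((u = r) \<noteq> (u = z)))"
      by blast
    then show ?thesis by (rule exI)
  qed
qed

lemma two_elems: "card X = 2 \<Longrightarrow> \<exists>a b. X = {a, b} \<and> a \<noteq> b"
  by (simp add: card_2_iff)

lemma gcomp:
  fixes r :: 'v and ends :: "'e \<Rightarrow> 'v set"
  assumes two: "\<forall>e\<in>D. card (ends e) = 2"
    and Rv_def: "Rv = {w. (r, w) \<in> (vrel ends D)\<^sup>*}"
  shows "\<forall>e\<in>D. ends e \<inter> Rv \<noteq> {} \<longrightarrow> ends e \<subseteq> Rv"
    and "geven ends D \<Longrightarrow> geven ends {e\<in>D. ends e \<inter> Rv \<noteq> {}}"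
proof -
  show sub: "\<forall>e\<in>D. ends e \<inter> Rv \<noteq> {} \<longrightarrow> ends e \<subseteq> Rv"
  proof (intro ballI impI)
    fix e assume e: "e \<in> D" "ends e \<inter> Rv \<noteq> {}"
    obtain a b where ab: "ends e = {a,b}" using two_elems two e(1) by blast
    have "(a,b) \<in> vrel ends D" "(b,a) \<in> vrel ends D" unfolding vrel_def using e(1) ab by (auto simp: insert_commute)
    then show "ends e \<subseteq> Rv" using e(2) unfolding ab Rv_def
      by (auto intro: rtrancl_into_rtrancl)
  qed
  assume ev: "geven ends D"
  show "geven ends {e\<in>D. ends e \<inter> Rv \<noteq> {}}"
    unfolding geven_def
  proof
    fix v
    show "even (gdeg ends {e\<in>D. ends e \<inter> Rv \<noteq> {}} v)"
    proof (cases "v \<in> Rv")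
      case True
      then have "{e\<in>{e\<in>D. ends e \<inter> Rv \<noteq> {}}. v \<in> ends e} = {e\<in>D. v \<in> ends e}" by blast
      then show ?thesis using ev unfolding geven_def gdeg_def by simp
    next
      case False
      then have h: "{e\<in>{e\<in>D. ends e \<inter> Rv \<noteq> {}}. v \<in> ends e} = {}" using sub by blast
      show ?thesis unfolding gdeg_def h by simp
    qed
  qed
qed

lemma cycle_sub:
  assumes finD: "finite D" and deg: "\<forall>x. gdeg ends D x \<in> {0, 2}"
    and conn: "\<forall>e1\<in>D. \<forall>e2\<in>D. (e1, e2) \<in> (erel ends D)\<^sup>*"
    and sub: "D' \<subseteq> D" and ne: "D' \<noteq> {}" and ev: "geven ends D'"
  shows "D' = D"
proof -
  obtain e1 where e1: "e1 \<in> D'" using ne by blast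
  have "f \<in> D'" if "(e1, f) \<in> (erel ends D)\<^sup>*" for f
    using that
  proof (induction rule: rtrancl_induct)
    case base then show ?case using e1 .
  next
    case (step e f)
    from step.hyps(2) obtain x where x: "x \<in> ends e" "x \<in> ends f" "e \<in> D" "f \<in> D"
      unfolding erel_def by blast
    let ?A = "{g\<in>D'. x \<in> ends g}" and ?B = "{g\<in>D. x \<in> ends g}"
    have fB: "finite ?B" using finD by simp
    have AB: "?A \<subseteq> ?B" using sub by blast
    have "e \<in> ?B" using x by blast
    then have "card ?B \<noteq> 0" using fB by auto
    then have cB: "card ?B = 2" using deg[rule_format, of x] unfolding gdeg_def by simp
    have "e \<in> ?A" using x step.IH by blast
    then have "card ?A \<noteq> 0" using fB AB by (metis card_0_eq empty_iff finite_subset)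
    moreover have "even (card ?A)" using ev[unfolded geven_def gdeg_def, rule_format, of x] .
    moreover have "card ?A \<le> card ?B" using AB fB by (rule card_mono[rotated])
    ultimately have "card ?A = card ?B" using cB by presburger
    then have "?A = ?B" using AB fB by (metis card_subset_eq)
    then show ?case using x by blast
  qed
  moreover have e1D: "e1 \<in> D" using e1 sub by blast
  ultimately have "D \<subseteq> D'" using conn[rule_format, OF e1D] by blast
  then show ?thesis using sub by blast
qed

lemma min_even_conn:
  assumes finD: "finite D"
    and ev: "geven ends D"
    and min: "\<forall>D'. D' \<subseteq> D \<longrightarrow> D' \<noteq> {} \<longrightarrow> geven ends D' \<longrightarrow> D' = D"
  shows "\<forall>e1\<in>D. \<forall>e2\<in>D. (e1, e2) \<in> (erel ends D)\<^sup>*"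
proof (intro ballI)
  fix e1 e2 assume e1: "e1 \<in> D" and e2: "e2 \<in> D"
  let ?D1 = "{f\<in>D. (e1, f) \<in> (erel ends D)\<^sup>*}"
  have "geven ends ?D1"
    unfolding geven_def
  proof
    fix v
    show "even (gdeg ends ?D1 v)"
    proof (cases "\<exists>f\<in>?D1. v \<in> ends f")
      case True
      then obtain f where f: "f \<in> ?D1" "v \<in> ends f" by blast
      have h: "{g\<in>?D1. v \<in> ends g} = {g\<in>D. v \<in> ends g}"
      proof (intro set_eqI iffI)
        fix g assume g: "g \<in> {g\<in>D. v \<in> ends g}"
        then have "(f, g) \<in> erel ends D" using f unfolding erel_def by blast
        then have "(e1, g) \<in> (erel ends D)\<^sup>*" using f by (blast intro: rtrancl_into_rtrancl)
        then show "g \<in> {g\<in>?D1. v \<in> ends g}" using g by blast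
      qed blast
      show ?thesis unfolding gdeg_def h using ev[unfolded geven_def gdeg_def, rule_format, of v] .
    next
      case False
      then have h: "{g\<in>?D1. v \<in> ends g} = {}" by blast
      show ?thesis unfolding gdeg_def h by simp
    qed
  qed
  moreover have "?D1 \<noteq> {}" using e1 by blast
  moreover have "?D1 \<subseteq> D" by blast
  ultimately have "?D1 = D" using min[rule_format, of ?D1] by blast
  then show "(e1, e2) \<in> (erel ends D)\<^sup>*" using e2 by blast
qed

lemma ne_of_card: "Suc 0 \<le> card A \<Longrightarrow> A \<noteq> {}" by auto

lemma min_even_deg:
  fixes ends :: "'e \<Rightarrow> 'v set"
  assumes finD: "finite D" and two: "\<forall>e\<in>D. card (ends e) = 2" and ev: "geven ends D"
    and min: "\<forall>D'. D' \<subseteq> D \<longrightarrow> D' \<noteq> {} \<longrightarrow> geven ends D' \<longrightarrow> D' = D"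
  shows "gdeg ends D x \<in> {0, 2}"
proof (rule ccontr)
  assume nd: "gdeg ends D x \<notin> {0, 2}"
  let ?Dx = "{e\<in>D. x \<in> ends e}"
  have fDx: "finite ?Dx" using finD by simp
  have "even (card ?Dx)" using ev[unfolded geven_def gdeg_def, rule_format, of x] .
  moreover have "card ?Dx \<noteq> 0" "card ?Dx \<noteq> 2" using nd unfolding gdeg_def by auto
  ultimately have c3: "card ?Dx \<ge> 3" by presburger
  then have "?Dx \<noteq> {}" by (intro ne_of_card) simp
  then obtain e1 where e1: "e1 \<in> ?Dx" by blast
  have "card (?Dx - {e1}) \<ge> 2" using c3 e1 fDx by simp
  then have "?Dx - {e1} \<noteq> {}" by (intro ne_of_card) simp
  then obtain e2 where e2: "e2 \<in> ?Dx" "e2 \<noteq> e1" by blast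
  have "card (?Dx - {e1, e2}) \<ge> 1" using c3 e1 e2 fDx by (simp add: card_Diff_subset)
  then have "?Dx - {e1, e2} \<noteq> {}" by (intro ne_of_card) simp
  then obtain e3 where e3: "e3 \<in> ?Dx" "e3 \<noteq> e1" "e3 \<noteq> e2" by blast
  define ends' where "ends' e = (if e = e1 \<or> e = e2 then insert None (Some ` (ends e - {x})) else Some ` ends e)" for e
  have Nends: "None \<in> ends' e \<longleftrightarrow> e = e1 \<or> e = e2" for e unfolding ends'_def by auto
  have Sends: "Some v \<in> ends' e \<longleftrightarrow> (if e = e1 \<or> e = e2 then v \<in> ends e \<and> v \<noteq> x else v \<in> ends e)" for v e
    unfolding ends'_def by auto
  have da: "gdeg ends' T (Some v) = gdeg ends T v" if "v \<noteq> x" for T v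
  proof -
    have "{e\<in>T. Some v \<in> ends' e} = {e\<in>T. v \<in> ends e}" using that Sends by auto
    then show ?thesis unfolding gdeg_def by simp
  qed
  have db: "gdeg ends T x = gdeg ends' T None + gdeg ends' T (Some x)" if T: "T \<subseteq> D" for T
  proof -
    have fT: "finite T" using T finD by (rule finite_subset)
    have "{e\<in>T. x \<in> ends e} = {e\<in>T. None \<in> ends' e} \<union> {e\<in>T. Some x \<in> ends' e}"
      using Nends Sends e1 e2 by auto
    moreover have "{e\<in>T. None \<in> ends' e} \<inter> {e\<in>T. Some x \<in> ends' e} = {}"
      using Nends Sends by auto
    ultimately show ?thesis unfolding gdeg_def using fT by (simp add: card_Un_disjoint)
  qed
  have dc: "gdeg ends' D None = 2"
  proof -
    have "{e\<in>D. None \<in> ends' e} = {e1, e2}" using Nends e1 e2 by auto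
    then show ?thesis unfolding gdeg_def using e2(2) by simp
  qed
  have two': "\<forall>e\<in>D. card (ends' e) = 2"
  proof
    fix e assume eD: "e \<in> D"
    show "card (ends' e) = 2"
    proof (cases "e = e1 \<or> e = e2")
      case True
      then have xe: "x \<in> ends e" using e1 e2 by blast
      obtain a b where ab: "ends e = {a, b}" "a \<noteq> b" using two_elems two eD by blast
      obtain y where y: "ends e - {x} = {y}"
        using xe ab by (metis Diff_insert_absorb insert_Diff_single insert_absorb2 insert_commute
            insert_iff singletonD)
      have "ends' e = {None, Some y}" unfolding ends'_def using True y by simp
      then show ?thesis by simp
    next
      case False
      then have "ends' e = Some ` ends e" unfolding ends'_def by simp
      moreover have "card (Some ` ends e) = card (ends e)" by (rule card_image) simp
      ultimately show ?thesis using two eD by simp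
    qed
  qed
  have ev': "geven ends' D"
    unfolding geven_def
  proof
    fix u show "even (gdeg ends' D u)"
    proof (cases u)
      case None then show ?thesis using dc by simp
    next
      case (Some v)
      show ?thesis
      proof (cases "v = x")
        case True
        have "even (gdeg ends D x)" using ev unfolding geven_def by blast
        then show ?thesis using db[of D] dc Some True by simp
      next
        case False
        then show ?thesis using da[of v D] ev Some unfolding geven_def by simp
      qed
    qed
  qed
  have hback: "geven ends T" if hyps: "T \<subseteq> D" "\<forall>v. v \<noteq> x \<longrightarrow> even (gdeg ends' T (Some v))"
    "even (gdeg ends' T None + gdeg ends' T (Some x))" for T
    unfolding geven_def
  proof
    fix v show "even (gdeg ends T v)"
    proof (cases "v = x")
      case True then show ?thesis using db[OF hyps(1)] hyps(3) by simp
    next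
      case False then show ?thesis using da[OF False, of T] hyps(2)[rule_format, OF False] by simp
    qed
  qed
  define Rv where "Rv = {w. (None, w) \<in> (vrel ends' D)\<^sup>*}"
  show False
  proof (cases "Some x \<in> Rv")
    case True
    then have "(None, Some x) \<in> (vrel ends' D)\<^sup>*" unfolding Rv_def by simp
    then have "\<exists>T. T \<subseteq> D \<and> (\<forall>u. odd (gdeg ends' T u) \<longleftrightarrow> ((u = None) \<noteq> (u = Some x)))"
      by (rule gjoin[OF finD])
    then obtain T where T: "T \<subseteq> D" "\<forall>u. odd (gdeg ends' T u) \<longleftrightarrow> ((u = None) \<noteq> (u = Some x))"
      by (elim exE conjE)
    have oN: "odd (gdeg ends' T None)" using T(2) by simp
    have oX: "odd (gdeg ends' T (Some x))" using T(2) by simp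
    have "geven ends T"
    proof (rule hback[OF T(1)])
      show "\<forall>v. v \<noteq> x \<longrightarrow> even (gdeg ends' T (Some v))"
      proof (intro allI impI)
        fix v assume "v \<noteq> x"
        then show "even (gdeg ends' T (Some v))" using T(2)[rule_format, of "Some v"] by simp
      qed
      show "even (gdeg ends' T None + gdeg ends' T (Some x))" using oN oX by simp
    qed
    moreover have "T \<noteq> {}"
    proof
      assume "T = {}" then show False using oN by (simp add: gdeg_empty)
    qed
    ultimately have "T = D" using min T(1) by blast
    then show False using oN dc by simp
  next
    case False
    let ?D1 = "{e\<in>D. ends' e \<inter> Rv \<noteq> {}}"
    have sub1: "\<forall>e\<in>D. ends' e \<inter> Rv \<noteq> {} \<longrightarrow> ends' e \<subseteq> Rv"
      by (rule gcomp(1)[OF two' Rv_def])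
    have ev1: "geven ends' ?D1" by (rule gcomp(2)[OF two' Rv_def ev'])
    have hz: "{e\<in>?D1. Some x \<in> ends' e} = {}" using sub1 False by blast
    have z: "gdeg ends' ?D1 (Some x) = 0" unfolding gdeg_def hz by simp
    have "geven ends ?D1"
    proof (rule hback)
      show "?D1 \<subseteq> D" by blast
      show "\<forall>v. v \<noteq> x \<longrightarrow> even (gdeg ends' ?D1 (Some v))" using ev1 unfolding geven_def by blast
      show "even (gdeg ends' ?D1 None + gdeg ends' ?D1 (Some x))" using ev1 z unfolding geven_def by simp
    qed
    moreover have "None \<in> Rv" unfolding Rv_def by simp
    then have "e1 \<in> ?D1" using e1 Nends by blast
    then have "?D1 \<noteq> {}" by blast
    moreover have "?D1 \<subseteq> D" by blast
    ultimately have "?D1 = D" using min by blast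
    then have "e3 \<in> ?D1" using e3 by blast
    moreover have "Some x \<in> ends' e3" using e3 Sends by simp
    ultimately show False using sub1 False by blast
  qed
qed

lemma edgerel_sym: "(x, y) \<in> edgerel A \<Longrightarrow> (y, x) \<in> edgerel A"
  unfolding edgerel_def by (simp add: insert_commute)

lemma rtrancl_edgerel_sym: "(x, y) \<in> (edgerel A)\<^sup>* \<Longrightarrow> (y, x) \<in> (edgerel A)\<^sup>*"
proof (induction rule: rtrancl_induct)
  case base then show ?case by simp
next
  case (step y z)
  then show ?case using edgerel_sym converse_rtrancl_into_rtrancl by metis
qed

lemma crossing:
  assumes "(v, w) \<in> (edgerel E)\<^sup>*" "v \<in> X" "w \<notin> X"
  shows "\<exists>a b. {a, b} \<in> E \<and> a \<in> X \<and> b \<notin> X"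
  using assms
proof (induction rule: rtrancl_induct)
  case base then show ?case by simp
next
  case (step y z)
  show ?case
  proof (cases "y \<in> X")
    case True
    then show ?thesis using step.hyps(2) step.prems unfolding edgerel_def by blast
  next
    case False
    then show ?thesis using step.IH step.prems by blast
  qed
qed

lemma hs_edges_lat:
  assumes "e \<in> hs_edges S" "e = {x, y}"
  shows "lat_adj x y"
proof -
  obtain u v where uv: "e = {u,v}" "lat_adj u v" using assms(1) by (rule hs_edgesE)
  have sym: "lat_adj v u" using uv(2) unfolding lat_adj_def by (simp add: Int_commute)
  show ?thesis using uv sym assms(2) by (auto simp: doubleton_eq_iff)
qed

lemma side_pair:
  assumes "side_function S D q" "D \<subseteq> hs_edges S" "e \<in> D"
  obtains x y where "e = {x, y}" "q x" "\<not> q y"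
proof -
  have "e \<in> hs_edges S" using assms by blast
  then have "\<exists>u v. e = {u,v} \<and> q u \<noteq> q v" using assms unfolding side_function_def by blast
  then obtain u v where uv: "e = {u,v}" "q u \<noteq> q v" by blast
  show thesis
  proof (cases "q u")
    case True then show thesis using that[of u v] uv by simp
  next
    case False then show thesis using that[of v u] uv by (simp add: insert_commute)
  qed
qed

lemma side_keep:
  assumes "side_function S D q" "{a, b} \<in> hs_edges S" "{a, b} \<notin> D"
  shows "q a = q b"
proof -
  have "\<not> (\<exists>u v. {a,b} = {u,v} \<and> q u \<noteq> q v)" using assms unfolding side_function_def by blast
  then show ?thesis by blast
qed

lemma side_change:
  assumes "side_function S D q" "{a, b} \<in> hs_edges S" "q a \<noteq> q b"
  shows "{a, b} \<in> D"
  using assms unfolding side_function_def by blast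

lemma side_const:
  assumes sf: "side_function S D q" and D'D: "D \<subseteq> D0"
    and "(v, w) \<in> (edgerel (hs_edges S - D0))\<^sup>*"
  shows "q v = q w"
  using assms(3)
proof (induction rule: rtrancl_induct)
  case base then show ?case by simp
next
  case (step y z)
  then have "{y, z} \<in> hs_edges S" "{y, z} \<notin> D" using D'D unfolding edgerel_def by auto
  then show ?case using side_keep[OF sf] step.IH by metis
qed

definition cls :: "vert set set \<Rightarrow> vert set \<Rightarrow> vert \<Rightarrow> vert set" where
  "cls A V v = {w\<in>V. (v, w) \<in> (edgerel A)\<^sup>*}"

lemma components_cls: "components V A = cls A V ` V"
  unfolding components_def cls_def by simp

lemma hs_facts:
  assumes "hexagonal_system S"
  shows "finite S" "finite (hs_verts S)" "connected_graph (hs_verts S) (hs_edges S)"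
    "\<forall>c d. c \<notin> S \<longrightarrow> d \<notin> S \<longrightarrow> (c, d) \<in> {(x, y). cell_adj x y \<and> x \<notin> S \<and> y \<notin> S}\<^sup>*"
  using assms unfolding hexagonal_system_def two_connected_def by auto

lemma dual_cycle_parts:
  assumes "dual_cycle S D"
  shows "D \<noteq> {}" "\<forall>x. gdeg (dual_ends S) D x \<in> {0, 2}"
    "\<forall>e1\<in>D. \<forall>e2\<in>D. (e1, e2) \<in> (erel (dual_ends S) D)\<^sup>*"
  using assms unfolding dual_cycle_def gdeg_def erel_def by auto

lemma cutset_even:
  assumes "finite S" "finite (hs_verts S)"
  shows "geven (dual_ends S) (cutset S p)"
  unfolding geven_def using cut_even[OF assms] by blast

lemma cls_sub:
  assumes sf: "side_function S D q" and qv: "q v"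
  shows "cls (hs_edges S - D) V v \<subseteq> {w\<in>V. q w}"
proof
  fix w assume "w \<in> cls (hs_edges S - D) V v"
  then have w: "w \<in> V" "(v, w) \<in> (edgerel (hs_edges S - D))\<^sup>*" unfolding cls_def by auto
  have "q v = q w" by (rule side_const[OF sf _ w(2)]) simp
  then show "w \<in> {w\<in>V. q w}" using w qv by simp
qed

lemma cls_cut:
  assumes hs: "hexagonal_system S" and DE: "D \<subseteq> hs_edges S" and dc: "dual_cycle S D"
    and sf: "side_function S D q" and v: "v \<in> hs_verts S" and qv: "q v"
  shows "cutset S (\<lambda>w. w \<in> cls (hs_edges S - D) (hs_verts S) v) = D"
proof -
  let ?V = "hs_verts S" and ?E = "hs_edges S"
  let ?K = "cls (?E - D) ?V v"
  have finS: "finite S" and finV: "finite ?V" and cg: "connected_graph ?V ?E" using hs_facts[OF hs] by auto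
  have finD: "finite D" using fin_hs_edges[OF finV] DE by (rule finite_subset[rotated])
  have Kq: "?K \<subseteq> {w\<in>?V. q w}" by (rule cls_sub[OF sf qv])
  have vK: "v \<in> ?K" unfolding cls_def using v by simp
  have clos: "b \<in> ?K" if "a \<in> ?K" "{a, b} \<in> ?E" "{a, b} \<notin> D" for a b
  proof -
    have ed: "(a, b) \<in> edgerel (?E - D)" unfolding edgerel_def using that(2,3) by simp
    have p: "(v, a) \<in> (edgerel (?E - D))\<^sup>*" using that(1) unfolding cls_def by simp
    have "(v, b) \<in> (edgerel (?E - D))\<^sup>*" by (rule rtrancl_into_rtrancl[OF p ed])
    moreover have "b \<in> ?V" using hs_edges_verts[OF that(2)] by simp
    ultimately show ?thesis unfolding cls_def by simp
  qed
  have CD: "cutset S (\<lambda>w. w \<in> ?K) \<subseteq> D"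
  proof
    fix e assume "e \<in> cutset S (\<lambda>w. w \<in> ?K)"
    then obtain a b where e: "e \<in> ?E" "e = {a,b}" "(a \<in> ?K) \<noteq> (b \<in> ?K)" unfolding cutset_def by blast
    show "e \<in> D"
    proof (rule ccontr)
      assume nD: "e \<notin> D"
      show False
      proof (cases "a \<in> ?K")
        case True
        then have "b \<in> ?K" using clos[of a b] e nD by simp
        then show False using True e(3) by simp
      next
        case False
        then have bK: "b \<in> ?K" using e(3) by simp
        have "{b, a} \<in> ?E" "{b, a} \<notin> D" using e nD by (simp_all add: insert_commute)
        then have "a \<in> ?K" using clos[OF bK] by simp
        then show False using False by simp
      qed
    qed
  qed
  have Dne: "D \<noteq> {}" using dual_cycle_parts(1)[OF dc] .
  then obtain e0 where e0: "e0 \<in> D" by blast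
  obtain x0 y0 where xy0: "e0 = {x0, y0}" "q x0" "\<not> q y0" using side_pair[OF sf DE e0] by blast
  have y0V: "y0 \<in> ?V" using hs_edges_verts[of e0 S] e0 DE xy0(1) by blast
  have y0K: "y0 \<notin> ?K" using Kq xy0(3) by blast
  have "(v, y0) \<in> (edgerel ?E)\<^sup>*" using cg v y0V unfolding connected_graph_def by blast
  then obtain a b where ab: "{a, b} \<in> ?E" "a \<in> ?K" "b \<notin> ?K" using crossing[OF _ vK y0K] by blast
  have "{a, b} \<in> cutset S (\<lambda>w. w \<in> ?K)" unfolding cutset_def using ab ex_doubleton[of a b "\<lambda>w. w \<in> ?K"] by simp
  then have Cne: "cutset S (\<lambda>w. w \<in> ?K) \<noteq> {}" by blast
  have Cev: "geven (dual_ends S) (cutset S (\<lambda>w. w \<in> ?K))" by (rule cutset_even[OF finS finV])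
  show ?thesis
    by (rule cycle_sub[OF finD dual_cycle_parts(2)[OF dc] dual_cycle_parts(3)[OF dc] CD Cne Cev])
qed

lemma cls_eq:
  assumes hs: "hexagonal_system S" and DE: "D \<subseteq> hs_edges S" and dc: "dual_cycle S D"
    and sf: "side_function S D q" and v: "v \<in> hs_verts S" and qv: "q v"
  shows "cls (hs_edges S - D) (hs_verts S) v = {w\<in>hs_verts S. q w}"
proof
  let ?V = "hs_verts S" and ?E = "hs_edges S"
  show "cls (?E - D) ?V v \<subseteq> {w\<in>?V. q w}" by (rule cls_sub[OF sf qv])
  have Dne: "D \<noteq> {}" using dual_cycle_parts(1)[OF dc] .
  then obtain e0 where e0: "e0 \<in> D" by blast
  obtain x0 y0 where xy0: "e0 = {x0, y0}" "q x0" "\<not> q y0" using side_pair[OF sf DE e0] by blast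
  have key: "x0 \<in> cls (?E - D) ?V u" if u: "u \<in> ?V" "q u" for u
  proof -
    have "e0 \<in> cutset S (\<lambda>w. w \<in> cls (?E - D) ?V u)" using cls_cut[OF hs DE dc sf u] e0 by simp
    then obtain a b where ab: "e0 = {a, b}" "(a \<in> cls (?E - D) ?V u) \<noteq> (b \<in> cls (?E - D) ?V u)"
      unfolding cutset_def by blast
    have "y0 \<notin> cls (?E - D) ?V u" using cls_sub[OF sf u(2), of ?V] xy0(3) by blast
    then show ?thesis using ab xy0(1) by (auto simp: doubleton_eq_iff)
  qed
  show "{w\<in>?V. q w} \<subseteq> cls (?E - D) ?V v"
  proof
    fix u assume "u \<in> {w\<in>?V. q w}"
    then have u: "u \<in> ?V" "q u" by auto
    have "(v, x0) \<in> (edgerel (?E - D))\<^sup>*" using key[OF v qv] unfolding cls_def by simp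
    moreover have "(u, x0) \<in> (edgerel (?E - D))\<^sup>*" using key[OF u] unfolding cls_def by simp
    then have "(x0, u) \<in> (edgerel (?E - D))\<^sup>*" by (rule rtrancl_edgerel_sym)
    ultimately have "(v, u) \<in> (edgerel (?E - D))\<^sup>*" by (rule rtrancl_trans)
    then show "u \<in> cls (?E - D) ?V v" unfolding cls_def using u by simp
  qed
qed

lemma side_neg: "side_function S D q \<Longrightarrow> side_function S D (\<lambda>x. \<not> q x)"
  unfolding side_function_def by auto

lemma hs_black:
  assumes "e \<in> hs_edges S" "e = {x, y}"
  shows "black x \<noteq> black y"
  using lat_adj_black[OF hs_edges_lat[OF assms]] .

lemma rhs_imp_ecut:
  assumes hs: "hexagonal_system S" and DE: "D \<subseteq> hs_edges S" and dc: "dual_cycle S D"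
    and sf: "side_function S D p"
    and col: "\<forall>u\<in>\<Union>D. \<forall>v\<in>\<Union>D. p u \<longrightarrow> p v \<longrightarrow> black u = black v"
  shows "e_cut S D"
proof -
  let ?V = "hs_verts S" and ?E = "hs_edges S"
  define V1 where "V1 = {w\<in>?V. p w}"
  define V2 where "V2 = {w\<in>?V. \<not> p w}"
  have sfn: "side_function S D (\<lambda>x. \<not> p x)" by (rule side_neg[OF sf])
  have Dne: "D \<noteq> {}" using dual_cycle_parts(1)[OF dc] .
  then obtain e0 where e0: "e0 \<in> D" by blast
  obtain x0 y0 where xy0: "e0 = {x0, y0}" "p x0" "\<not> p y0" using side_pair[OF sf DE e0] by blast
  have e0E: "e0 \<in> ?E" using e0 DE by blast
  have x0V: "x0 \<in> ?V" and y0V: "y0 \<in> ?V" using hs_edges_verts[OF e0E] xy0(1) by auto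
  have V1ne: "V1 \<noteq> {}" using x0V xy0(2) unfolding V1_def by blast
  have V2ne: "V2 \<noteq> {}" using y0V xy0(3) unfolding V2_def by blast
  have V12: "V1 \<union> V2 = ?V" "V1 \<inter> V2 = {}" unfolding V1_def V2_def by auto
  have Dform: "D = {e \<in> ?E. e \<inter> V1 \<noteq> {} \<and> e \<inter> V2 \<noteq> {}}"
  proof (intro set_eqI iffI)
    fix e assume e: "e \<in> D"
    obtain x y where xy: "e = {x, y}" "p x" "\<not> p y" using side_pair[OF sf DE e] by blast
    have eE: "e \<in> ?E" using e DE by blast
    have "x \<in> ?V" "y \<in> ?V" using hs_edges_verts[OF eE] xy(1) by auto
    then show "e \<in> {e \<in> ?E. e \<inter> V1 \<noteq> {} \<and> e \<inter> V2 \<noteq> {}}"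
      using eE xy unfolding V1_def V2_def by blast
  next
    fix e assume e: "e \<in> {e \<in> ?E. e \<inter> V1 \<noteq> {} \<and> e \<inter> V2 \<noteq> {}}"
    then have eE: "e \<in> ?E" by blast
    obtain x y where xy: "e = {x, y}" using hs_edgesE[OF eE] by metis
    have "p x \<noteq> p y"
    proof
      assume "p x = p y"
      moreover have "\<exists>z\<in>e. p z" "\<exists>z\<in>e. \<not> p z" using e unfolding V1_def V2_def by blast+
      ultimately show False using xy by auto
    qed
    then show "e \<in> D" using side_change[OF sf] eE xy by blast
  qed
  have clsV: "cls (?E - D) ?V v = (if p v then V1 else V2)" if v: "v \<in> ?V" for v
  proof (cases "p v")
    case True
    then show ?thesis using cls_eq[OF hs DE dc sf v] unfolding V1_def by simp
  next
    case False
    then show ?thesis using cls_eq[OF hs DE dc sfn v] unfolding V2_def by simp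
  qed
  have comps: "components ?V (?E - D) = {V1, V2}"
  proof -
    have "cls (?E - D) ?V ` ?V = {V1, V2}"
    proof (intro set_eqI iffI)
      fix X assume "X \<in> cls (?E - D) ?V ` ?V"
      then obtain v where "v \<in> ?V" "X = cls (?E - D) ?V v" by blast
      then show "X \<in> {V1, V2}" using clsV by simp
    next
      fix X assume X: "X \<in> {V1, V2}"
      have "cls (?E - D) ?V x0 = V1" using clsV[OF x0V] xy0(2) by simp
      moreover have "cls (?E - D) ?V y0 = V2" using clsV[OF y0V] xy0(3) by simp
      ultimately show "X \<in> cls (?E - D) ?V ` ?V" using X x0V y0V by blast
    qed
    then show ?thesis unfolding components_cls .
  qed
  have V12ne: "V1 \<noteq> V2" using V12(2) V1ne by blast
  have pairs: "\<exists>x y. e = {x, y} \<and> p x \<and> \<not> p y \<and> x \<in> V1 \<and> y \<in> V2 \<and> black x = black x0 \<and> black y \<noteq> black x"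
    if e: "e \<in> D" for e
  proof -
    obtain x y where xy: "e = {x, y}" "p x" "\<not> p y" using side_pair[OF sf DE e] by blast
    have eE: "e \<in> ?E" using e DE by blast
    have "x \<in> ?V" "y \<in> ?V" using hs_edges_verts[OF eE] xy(1) by auto
    then have "x \<in> V1" "y \<in> V2" using xy unfolding V1_def V2_def by auto
    moreover have "black x = black x0" using col e e0 xy xy0 by blast
    moreover have "black y \<noteq> black x" using hs_black[OF eE xy(1)] by simp
    ultimately show ?thesis using xy by blast
  qed
  have part: "\<exists>V1 V2. V1 \<union> V2 = ?V \<and> V1 \<inter> V2 = {} \<and> V1 \<noteq> {} \<and> V2 \<noteq> {} \<and>
        D = {e \<in> ?E. e \<inter> V1 \<noteq> {} \<and> e \<inter> V2 \<noteq> {}}"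
    using V12 V1ne V2ne Dform by blast
  have bw: "\<exists>B W. B \<noteq> W \<and> components ?V (?E - D) = {B, W} \<and>
        (\<forall>e\<in>D. \<exists>b w. e = {b, w} \<and> b \<in> B \<and> w \<in> W \<and> black b \<and> \<not> black w)"
  proof (cases "black x0")
    case True
    have "\<forall>e\<in>D. \<exists>b w. e = {b, w} \<and> b \<in> V1 \<and> w \<in> V2 \<and> black b \<and> \<not> black w"
    proof
      fix e assume "e \<in> D"
      then obtain x y where "e = {x, y}" "x \<in> V1" "y \<in> V2" "black x = black x0" "black y \<noteq> black x"
        using pairs by blast
      then show "\<exists>b w. e = {b, w} \<and> b \<in> V1 \<and> w \<in> V2 \<and> black b \<and> \<not> black w" using True by blast
    qed
    then show ?thesis using V12ne comps by blast
  next
    case False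
    have "\<forall>e\<in>D. \<exists>b w. e = {b, w} \<and> b \<in> V2 \<and> w \<in> V1 \<and> black b \<and> \<not> black w"
    proof
      fix e assume "e \<in> D"
      then obtain x y where "e = {x, y}" "x \<in> V1" "y \<in> V2" "black x = black x0" "black y \<noteq> black x"
        using pairs by blast
      then show "\<exists>b w. e = {b, w} \<and> b \<in> V2 \<and> w \<in> V1 \<and> black b \<and> \<not> black w"
        using False by (metis insert_commute)
    qed
    moreover have "components ?V (?E - D) = {V2, V1}" using comps by (simp add: insert_commute)
    ultimately show ?thesis using V12ne by blast
  qed
  show ?thesis unfolding e_cut_def using DE part bw by blast
qed

lemma cls_refl: "v \<in> V \<Longrightarrow> v \<in> cls A V v"
  unfolding cls_def by simp

lemma cls_same:
  assumes "z \<in> cls A V v" shows "cls A V z = cls A V v"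
proof -
  have zv: "(v, z) \<in> (edgerel A)\<^sup>*" using assms unfolding cls_def by simp
  then have vz: "(z, v) \<in> (edgerel A)\<^sup>*" by (rule rtrancl_edgerel_sym)
  show ?thesis
  proof (intro set_eqI iffI)
    fix w assume "w \<in> cls A V z"
    then have "w \<in> V" "(z, w) \<in> (edgerel A)\<^sup>*" unfolding cls_def by auto
    then show "w \<in> cls A V v" using zv unfolding cls_def by (simp add: rtrancl_trans[OF zv])
  next
    fix w assume "w \<in> cls A V v"
    then have "w \<in> V" "(v, w) \<in> (edgerel A)\<^sup>*" unfolding cls_def by auto
    then show "w \<in> cls A V z" using vz unfolding cls_def by (simp add: rtrancl_trans[OF vz])
  qed
qed

lemma ecut_imp_rhs:
  assumes hs: "hexagonal_system S" and DE: "D \<subseteq> hs_edges S" and ec: "e_cut S D"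
  shows "dual_cycle S D \<and>
            (\<exists>side. side_function S D side \<and>
               (\<forall>u\<in>\<Union>D. \<forall>v\<in>\<Union>D. side u \<longrightarrow> side v \<longrightarrow> black u = black v))"
proof -
  let ?V = "hs_verts S" and ?E = "hs_edges S"
  have finS: "finite S" and finV: "finite ?V" and cg: "connected_graph ?V ?E"
    and conn: "\<forall>c d. c \<notin> S \<longrightarrow> d \<notin> S \<longrightarrow> (c, d) \<in> {(x, y). cell_adj x y \<and> x \<notin> S \<and> y \<notin> S}\<^sup>*"
    using hs_facts[OF hs] by auto
  have finD: "finite D" using fin_hs_edges[OF finV] DE by (rule finite_subset[rotated])
  have ec1: "\<exists>V1 V2. V1 \<union> V2 = ?V \<and> V1 \<inter> V2 = {} \<and> V1 \<noteq> {} \<and> V2 \<noteq> {} \<and>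
        D = {e \<in> ?E. e \<inter> V1 \<noteq> {} \<and> e \<inter> V2 \<noteq> {}}"
    using ec unfolding e_cut_def by (elim conjE)
  have ec2: "\<exists>B W. B \<noteq> W \<and> components ?V (?E - D) = {B, W} \<and>
        (\<forall>e\<in>D. \<exists>b w. e = {b, w} \<and> b \<in> B \<and> w \<in> W \<and> black b \<and> \<not> black w)"
    using ec unfolding e_cut_def by (elim conjE)
  obtain V1 V2 where P: "V1 \<union> V2 = ?V" "V1 \<inter> V2 = {}" "V1 \<noteq> {}" "V2 \<noteq> {}"
    "D = {e \<in> ?E. e \<inter> V1 \<noteq> {} \<and> e \<inter> V2 \<noteq> {}}"
    using ec1 by (elim exE conjE)
  obtain B W where BW: "B \<noteq> W" "components ?V (?E - D) = {B, W}"
    "\<forall>e\<in>D. \<exists>b w. e = {b, w} \<and> b \<in> B \<and> w \<in> W \<and> black b \<and> \<not> black w"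
    using ec2 by (elim exE conjE)
  let ?cls = "cls (?E - D) ?V"
  have BWc: "B \<in> ?cls ` ?V" "W \<in> ?cls ` ?V" using BW(2) unfolding components_cls by (simp_all add: insert_iff)
  obtain b0 where b0: "b0 \<in> ?V" "B = ?cls b0" using BWc(1) by blast
  obtain w0 where w0: "w0 \<in> ?V" "W = ?cls w0" using BWc(2) by blast
  have clsBW: "?cls v = B \<or> ?cls v = W" if "v \<in> ?V" for v
  proof -
    have "?cls v \<in> ?cls ` ?V" using that by (rule imageI)
    then have "?cls v \<in> {B, W}" using BW(2) unfolding components_cls by simp
    then show ?thesis by simp
  qed
  have Bcl: "?cls z = B" if "z \<in> B" for z
  proof -
    have "z \<in> ?cls b0" using that b0(2) by simp
    then have "?cls z = ?cls b0" by (rule cls_same)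
    then show ?thesis using b0(2) by simp
  qed
  have Wcl: "?cls z = W" if "z \<in> W" for z
  proof -
    have "z \<in> ?cls w0" using that w0(2) by simp
    then have "?cls z = ?cls w0" by (rule cls_same)
    then show ?thesis using w0(2) by simp
  qed
  have BWdisj: "B \<inter> W = {}"
  proof (rule ccontr)
    assume "B \<inter> W \<noteq> {}"
    then obtain z where zB: "z \<in> B" and zW: "z \<in> W" by blast
    have "?cls z = B" "?cls z = W" using Bcl[OF zB] Wcl[OF zW] by simp_all
    then show False using BW(1) by simp
  qed
  have BWV: "B \<union> W = ?V"
  proof
    show "B \<union> W \<subseteq> ?V" using b0 w0 unfolding cls_def by auto
    show "?V \<subseteq> B \<union> W"
    proof
      fix v assume v: "v \<in> ?V"
      then have "v \<in> ?cls v" by (rule cls_refl)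
      then show "v \<in> B \<union> W" using clsBW[OF v] by auto
    qed
  qed
  define p where "p = (\<lambda>v. v \<in> B)"
  have Dcut: "D = cutset S p"
  proof (intro set_eqI iffI)
    fix e assume e: "e \<in> D"
    then obtain b w where bw: "e = {b, w}" "b \<in> B" "w \<in> W" using BW(3) by blast
    have "w \<notin> B" using bw(3) BWdisj by blast
    then show "e \<in> cutset S p" unfolding cutset_def p_def using e DE bw by blast
  next
    fix e assume "e \<in> cutset S p"
    then obtain x y where e: "e \<in> ?E" "e = {x, y}" "p x \<noteq> p y" unfolding cutset_def by blast
    have xyV: "x \<in> ?V" "y \<in> ?V" using hs_edges_verts[OF e(1)] e(2) by auto
    show "e \<in> D"
    proof (rule ccontr)
      assume nD: "e \<notin> D"
      have "(x, y) \<in> edgerel (?E - D)" "(y, x) \<in> edgerel (?E - D)"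
        unfolding edgerel_def using e nD by (auto simp: insert_commute)
      then have yx: "y \<in> ?cls x" "x \<in> ?cls y" unfolding cls_def using xyV by auto
      have cyx: "?cls y = ?cls x" by (rule cls_same[OF yx(1)])
      have clsB: "?cls v = B \<longleftrightarrow> v \<in> B" if vV: "v \<in> ?V" for v
      proof
        assume "?cls v = B" then show "v \<in> B" using cls_refl[where A="?E - D", OF vV] by simp
      next
        assume "v \<in> B" then show "?cls v = B" by (rule Bcl)
      qed
      have "x \<in> B \<longleftrightarrow> y \<in> B"
      proof -
        have "x \<in> B \<longleftrightarrow> ?cls x = B" using clsB[OF xyV(1)] by simp
        also have "\<dots> \<longleftrightarrow> ?cls y = B" using cyx by simp
        also have "\<dots> \<longleftrightarrow> y \<in> B" using clsB[OF xyV(2)] by simp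
        finally show ?thesis .
      qed
      then show False using e(3) unfolding p_def by simp
    qed
  qed
  have sfp: "side_function S D p"
    unfolding side_function_def
  proof
    fix e assume "e \<in> ?E"
    then show "e \<in> D \<longleftrightarrow> (\<exists>u v. e = {u, v} \<and> p u \<noteq> p v)" unfolding Dcut cutset_def by blast
  qed
  have colp: "\<forall>u\<in>\<Union>D. \<forall>v\<in>\<Union>D. p u \<longrightarrow> p v \<longrightarrow> black u = black v"
  proof -
    have "black u" if hu: "u \<in> \<Union>D" "p u" for u
    proof -
      obtain e where e: "e \<in> D" "u \<in> e" using hu(1) by blast
      then obtain b w where bw: "e = {b, w}" "b \<in> B" "w \<in> W" "black b" using BW(3) by blast
      have "u \<noteq> w" using hu(2) bw(3) BWdisj unfolding p_def by blast
      then have "u = b" using e(2) bw(1) by blast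
      then show ?thesis using bw(4) by simp
    qed
    then show ?thesis by blast
  qed
  have Dne: "D \<noteq> {}"
  proof -
    obtain v1 v2 where v: "v1 \<in> V1" "v2 \<in> V2" using P(3,4) by blast
    have "v1 \<in> ?V" "v2 \<in> ?V" using v P(1) by auto
    then have "(v1, v2) \<in> (edgerel ?E)\<^sup>*" using cg unfolding connected_graph_def by blast
    moreover have "v2 \<notin> V1" using v P(2) by blast
    ultimately obtain a b where ab: "{a, b} \<in> ?E" "a \<in> V1" "b \<notin> V1" using crossing v(1) by metis
    have "b \<in> ?V" using hs_edges_verts[OF ab(1)] by simp
    then have "b \<in> V2" using ab(3) P(1) by blast
    then have "{a, b} \<in> D" using ab P(5) by blast
    then show ?thesis by blast
  qed
  have evD: "geven (dual_ends S) D" unfolding Dcut by (rule cutset_even[OF finS finV])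
  have two: "\<forall>e\<in>D. card (dual_ends S e) = 2" using card_dual_ends DE by blast
  have min: "\<forall>D'. D' \<subseteq> D \<longrightarrow> D' \<noteq> {} \<longrightarrow> geven (dual_ends S) D' \<longrightarrow> D' = D"
  proof (intro allI impI)
    fix D' assume D': "D' \<subseteq> D" "D' \<noteq> {}" "geven (dual_ends S) D'"
    have D'E: "D' \<subseteq> ?E" using D' DE by blast
    have "\<exists>side. side_function S D' side"
      by (rule even_is_cut[OF finS finV conn D'E D'(3)[unfolded geven_def]])
    then obtain q where q: "side_function S D' q" by blast
    have qc: "q z = q v" if "z \<in> ?cls v" for z v
    proof -
      have "(v, z) \<in> (edgerel (?E - D))\<^sup>*" using that unfolding cls_def by simp
      then show ?thesis using side_const[OF q D'(1)] by metis
    qed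
    have qB: "q z = q b0" if "z \<in> B" for z using qc that b0(2) by blast
    have qW: "q z = q w0" if "z \<in> W" for z using qc that w0(2) by blast
    obtain e' where e': "e' \<in> D'" using D'(2) by blast
    then have e'D: "e' \<in> D" using D'(1) by blast
    obtain x y where xy: "e' = {x, y}" "q x" "\<not> q y" using side_pair[OF q D'E e'] by blast
    obtain b w where bw: "e' = {b, w}" "b \<in> B" "w \<in> W" using BW(3) e'D by blast
    have "q b \<noteq> q w" using xy bw(1) by (auto simp: doubleton_eq_iff)
    then have qbw: "q b0 \<noteq> q w0" using qB[OF bw(2)] qW[OF bw(3)] by simp
    show "D' = D"
    proof
      show "D' \<subseteq> D" using D'(1) .
      show "D \<subseteq> D'"
      proof
        fix e assume e: "e \<in> D"
        then obtain b w where bw: "e = {b, w}" "b \<in> B" "w \<in> W" using BW(3) by blast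
        have "q b \<noteq> q w" using qB[OF bw(2)] qW[OF bw(3)] qbw by simp
        moreover have "{b, w} \<in> ?E" using e DE bw(1) by blast
        ultimately show "e \<in> D'" using side_change[OF q] bw(1) by blast
      qed
    qed
  qed
  have deg: "\<forall>x. gdeg (dual_ends S) D x \<in> {0, 2}"
    using min_even_deg[OF finD two evD min] by blast
  have cn: "\<forall>e1\<in>D. \<forall>e2\<in>D. (e1, e2) \<in> (erel (dual_ends S) D)\<^sup>*"
    by (rule min_even_conn[OF finD evD min])
  have dcy: "dual_cycle S D"
    unfolding dual_cycle_def using Dne deg cn unfolding gdeg_def erel_def by blast
  have "side_function S D p \<and> (\<forall>u\<in>\<Union>D. \<forall>v\<in>\<Union>D. p u \<longrightarrow> p v \<longrightarrow> black u = black v)"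
    using sfp colp by blast
  then have "\<exists>side. side_function S D side \<and> (\<forall>u\<in>\<Union>D. \<forall>v\<in>\<Union>D. side u \<longrightarrow> side v \<longrightarrow> black u = black v)"
    by (rule exI[of "\<lambda>side. side_function S D side \<and> (\<forall>u\<in>\<Union>D. \<forall>v\<in>\<Union>D. side u \<longrightarrow> side v \<longrightarrow> black u = black v)"])
  then show ?thesis using dcy by blast
qed

theorem mainTheorem2:
  assumes "hexagonal_system S"
    and "D \<subseteq> hs_edges S"
  shows "e_cut S D \<longleftrightarrow>
           (dual_cycle S D \<and>
            (\<exists>side. side_function S D side \<and>
               (\<forall>u\<in>\<Union>D. \<forall>v\<in>\<Union>D. side u \<longrightarrow> side v \<longrightarrow> black u = black v)))"
proof
  assume "e_cut S D"
  then show "dual_cycle S D \<and>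
            (\<exists>side. side_function S D side \<and>
               (\<forall>u\<in>\<Union>D. \<forall>v\<in>\<Union>D. side u \<longrightarrow> side v \<longrightarrow> black u = black v))"
    by (rule ecut_imp_rhs[OF assms])
next
  assume r: "dual_cycle S D \<and>
            (\<exists>side. side_function S D side \<and>
               (\<forall>u\<in>\<Union>D. \<forall>v\<in>\<Union>D. side u \<longrightarrow> side v \<longrightarrow> black u = black v))"
  then have dc: "dual_cycle S D" by (elim conjE)
  from r obtain p where p: "side_function S D p"
    "\<forall>u\<in>\<Union>D. \<forall>v\<in>\<Union>D. p u \<longrightarrow> p v \<longrightarrow> black u = black v" by (elim conjE exE)
  show "e_cut S D" by (rule rhs_imp_ecut[OF assms dc p])
qed

end
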